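(* Let $\hat y=\hat y(t,p,\omega,y)$ ($t\in\mathbb R$, $p,y\in\mathbb R^n$, $\omega\in\mathbb R^p$) be the solution of the system $$\frac{d\hat y^a}{dt}=\left(\sqrt{K(\hat y)}\cot\sqrt{K(\hat y)}\right)^a{}_bp^b-\omega^iD^a{}_{ib}\hat y^b,\qquad \hat y^a\big|_{t=0}=y^a.$$ Then, with $D(\omega)=\omega^iD_i$, $$\hat y^a=\left(\exp[-tD(\omega)]\right)^a{}_by^b+\left(\frac{1-\exp[-tD(\omega)]}{D(\omega)}\right)^a{}_bp^b+O(y^2,p^2,py),$$ and $$\det\left(\frac{\partial\hat y^a}{\partial p^b}\right)\Bigg|_{p=y=0,\,t=1}=\det{}_{TM}\left(\frac{\sinh[D(\omega)/2]}{D(\omega)/2}\right).$$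
   Context: $(M,g)$ is an $n$-dimensional complete simply connected Riemannian manifold with parallel Riemann tensor (a Riemannian symmetric space). Fix $x'\in M$, an orthonormal frame at $x'$, and Riemann normal coordinates $y^a$ centred at $x'$; frame indices $a,b,\dots\in\{1,\dots,n\}$ are raised/lowered with $\delta_{ab}$, and $R_{abcd}$ denote the (constant) frame components of the curvature at $x'$. The curvature is written as $R_{abcd}=\beta_{ik}E^i{}_{ab}E^k{}_{cd}$ with $E^i{}_{ab}$ ($i=1,\dots,p$) antisymmetric $n\times n$ matrices and $(\beta_{ik})$ a real symmetric nondegenerate $p\times p$ matrix; $D_i=(D^a{}_{ib})$ with $D^a{}_{ib}=-\beta_{ik}E^k{}_{cb}\delta^{ca}$ (these are traceless). For $y\in\mathbb R^n$, $K(y)$ is the $n\times n$ matrix $K^a{}_b=R^a{}_{cbd}y^cy^d$, and $\sqrt K\cot\sqrt K$ is defined by its power series. $\det_{TM}$ is the determinant of $n\times n$ matrices, and matrix functions such as $(1-e^{-tD})/D$ and $\sinh(D/2)/(D/2)$ are defined by power series. *)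

theory Defs
  imports "HOL-Analysis.Analysis" "HOL-Library.Landau_Symbols"
begin

primrec mpow :: "real^'n^'n \<Rightarrow> nat \<Rightarrow> real^'n^'n" where
  "mpow A 0 = mat 1"
| "mpow A (Suc k) = A ** mpow A k"

definition mat_series :: "(nat \<Rightarrow> real) \<Rightarrow> real^'n^'n \<Rightarrow> real^'n^'n" where
  "mat_series c A = (\<Sum>k. c k *\<^sub>R mpow A k)"

text \<open>The even function w cot w (value 1 at 0); the function sqrt z cot sqrt z
  has the power series in z whose k-th coefficient is the (2k)-th Taylor
  coefficient of w cot w at 0.\<close>
definition wcot :: "real \<Rightarrow> real" where
  "wcot w = (if w = 0 then 1 else w * cos w / sin w)"

definition sqrtcot_coeff :: "nat \<Rightarrow> real" where
  "sqrtcot_coeff k = (deriv ^^ (2 * k)) wcot 0 / fact (2 * k)"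

definition expneg_coeff :: "real \<Rightarrow> nat \<Rightarrow> real" where
  "expneg_coeff t k = (- t) ^ k / fact k"

text \<open>Coefficients of (1 - exp(-t x)) / x = sum_j (-1)^j t^(j+1) x^j / (j+1)!.\<close>
definition oneminusexp_div_coeff :: "real \<Rightarrow> nat \<Rightarrow> real" where
  "oneminusexp_div_coeff t j = (-1) ^ j * t ^ (j + 1) / fact (j + 1)"

text \<open>Coefficients of sinh(x/2)/(x/2) = sum_j (x/2)^(2j) / (2j+1)!.\<close>
definition sinhc_half_coeff :: "nat \<Rightarrow> real" where
  "sinhc_half_coeff k = (if even k then (1/2) ^ k / fact (k + 1) else 0)"

definition curv :: "('m::finite \<Rightarrow> real^'n^'n) \<Rightarrow> real^'m^'m \<Rightarrow> 'n \<Rightarrow> 'n \<Rightarrow> 'n \<Rightarrow> 'n \<Rightarrow> real" where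
  "curv E \<beta> a b c d = (\<Sum>i\<in>UNIV. \<Sum>k\<in>UNIV. \<beta> $ i $ k * E i $ a $ b * E k $ c $ d)"

text \<open>K(y)^a_b = R^a_cbd y^c y^d (indices raised with delta).\<close>
definition Kmat :: "('m::finite \<Rightarrow> real^'n^'n) \<Rightarrow> real^'m^'m \<Rightarrow> real^'n \<Rightarrow> real^'n^'n" where
  "Kmat E \<beta> y = (\<chi> a b. \<Sum>c\<in>UNIV. \<Sum>d\<in>UNIV. curv E \<beta> a c b d * y $ c * y $ d)"

text \<open>D_i with D^a_ib = - beta_ik E^k_cb delta^ca = - beta_ik E^k_ab.\<close>
definition Dgen :: "('m::finite \<Rightarrow> real^'n^'n) \<Rightarrow> real^'m^'m \<Rightarrow> 'm \<Rightarrow> real^'n^'n" where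
  "Dgen E \<beta> i = (\<chi> a b. - (\<Sum>k\<in>UNIV. \<beta> $ i $ k * E k $ a $ b))"

definition Dom :: "('m::finite \<Rightarrow> real^'n^'n) \<Rightarrow> real^'m^'m \<Rightarrow> real^'m \<Rightarrow> real^'n^'n" where
  "Dom E \<beta> \<omega> = (\<Sum>i\<in>UNIV. \<omega> $ i *\<^sub>R Dgen E \<beta> i)"

definition yhat_rhs :: "('m::finite \<Rightarrow> real^'n^'n) \<Rightarrow> real^'m^'m \<Rightarrow> real^'m \<Rightarrow> real^'n \<Rightarrow> real^'n \<Rightarrow> real^'n" where
  "yhat_rhs E \<beta> \<omega> p z = mat_series sqrtcot_coeff (Kmat E \<beta> z) *v p - Dom E \<beta> \<omega> *v z"

end

theory Submission imports Defs "HOL-Complex_Analysis.Cauchy_Integral_Formula" begin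

lemma normsq_vec: "norm (x::'a::real_normed_vector^'n) ^ 2 = (\<Sum>i\<in>UNIV. norm (x$i) ^ 2)"
  by (simp add: norm_vec_def L2_set_def sum_nonneg)

lemma row_mv: "(A *v x) $ i = (A $ i) \<bullet> (x::real^'n)"
  by (simp add: matrix_vector_mult_def inner_vec_def mult.commute)

lemma norm_mv: "norm (A *v (x::real^'n)) \<le> norm (A::real^'n^'m) * norm x"
proof -
  have "norm (A *v x) ^ 2 = (\<Sum>i\<in>UNIV. ((A $ i) \<bullet> x) ^ 2)"
    by (simp add: normsq_vec row_mv)
  also have "\<dots> \<le> (\<Sum>i\<in>UNIV. (norm (A$i) * norm x) ^ 2)"
    apply (rule sum_mono)
    by (metis Cauchy_Schwarz_ineq2 abs_ge_zero power_mono real_sqrt_abs real_sqrt_pow2_iff sqrt_le_D)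
  also have "\<dots> = (norm A * norm x) ^ 2"
    by (simp add: normsq_vec power_mult_distrib sum_distrib_right)
  finally show ?thesis
    using power2_le_imp_le by fastforce
qed

lemma norm_transpose: "norm (transpose (A::real^'n^'m)) = norm A"
proof -
  have "norm (transpose A) ^ 2 = norm A ^ 2"
    apply (simp add: normsq_vec transpose_def)
    apply (subst sum.swap) by simp
  then show ?thesis by (simp add: power2_eq_iff_nonneg)
qed

lemma norm_mm: "norm ((A::real^'n^'m) ** (B::real^'k^'n)) \<le> norm A * norm B"
proof -
  have r: "(A ** B) $ i = transpose B *v (A $ i)" for i
    by (simp add: matrix_matrix_mult_def matrix_vector_mult_def transpose_def vec_eq_iff mult.commute)
  have "norm (A ** B) ^ 2 = (\<Sum>i\<in>UNIV. norm (transpose B *v (A $ i)) ^ 2)"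
    by (simp add: normsq_vec[of "A ** B"] r)
  also have "\<dots> \<le> (\<Sum>i\<in>UNIV. (norm B * norm (A$i)) ^ 2)"
    apply (rule sum_mono) using norm_mv[of "transpose B"] norm_transpose[of B]
    by (metis norm_ge_zero power_mono)
  also have "\<dots> = (norm A * norm B) ^ 2"
    by (simp add: normsq_vec[of A] power_mult_distrib sum_distrib_left mult.commute)
  finally show ?thesis
    using power2_le_imp_le by fastforce
qed

lemma norm_mpow: "norm (mpow A k) \<le> norm (mat 1 :: real^'n^'n) * norm (A::real^'n^'n) ^ k"
proof (induction k)
  case 0 then show ?case by simp
next
  case (Suc k)
  have "norm (mpow A (Suc k)) \<le> norm A * norm (mpow A k)" by (simp add: norm_mm)
  also have "\<dots> \<le> norm A * (norm (mat 1 :: real^'n^'n) * norm A ^ k)"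
    using Suc by (simp add: mult_left_mono)
  finally show ?case by (simp add: algebra_simps)
qed

lemma entry_le: "\<bar>(M::real^'n^'m) $ i $ j\<bar> \<le> norm M"
proof -
  have "norm (M $ i) \<le> norm M" unfolding norm_vec_def by (rule member_le_L2_set) simp_all
  moreover have "\<bar>M $ i $ j\<bar> \<le> norm (M $ i)" by (rule component_le_norm_cart)
  ultimately show ?thesis by linarith
qed


lemma vd_entries:
  fixes F :: "real \<Rightarrow> real^'n^'m"
  assumes "\<And>i j. ((\<lambda>s. F s $ i $ j) has_real_derivative (F' $ i $ j)) (at s within S)"
  shows "(F has_vector_derivative F') (at s within S)"
  unfolding has_vector_derivative_def
proof (subst has_derivative_componentwise_within, intro ballI)
  fix b :: "real^'n^'m" assume "b \<in> Basis"
  then obtain i u where b: "b = axis i u" and u: "u \<in> (Basis :: (real^'n) set)"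
    by (auto simp: Basis_vec_def)
  then obtain j where u': "u = axis j 1" by (auto simp: Basis_vec_def)
  have e: "G \<bullet> b = G $ i $ j" for G :: "real^'n^'m"
    by (simp add: b u' inner_axis)
  show "((\<lambda>x. F x \<bullet> b) has_derivative (\<lambda>x. x *\<^sub>R F' \<bullet> b)) (at s within S)"
    unfolding e
    by (rule has_derivative_eq_rhs[OF has_field_derivative_imp_has_derivative[OF assms[of i j]]])
       (simp add: fun_eq_iff mult.commute)
qed

lemma mm_scaleR_right: "(A::real^'n^'m) ** (c *\<^sub>R (B::real^'k^'n)) = c *\<^sub>R (A ** B)"
  by (simp add: matrix_matrix_mult_def vec_eq_iff sum_distrib_left algebra_simps)
lemma mm_scaleR_left: "(c *\<^sub>R (A::real^'n^'m)) ** (B::real^'k^'n) = c *\<^sub>R (A ** B)"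
  by (simp add: matrix_matrix_mult_def vec_eq_iff sum_distrib_left algebra_simps)
lemma mm_add_right: "(A::real^'n^'m) ** ((B::real^'k^'n) + C) = A ** B + A ** C"
  by (simp add: matrix_matrix_mult_def vec_eq_iff sum.distrib algebra_simps)
lemma mm_add_left: "((A::real^'n^'m) + B) ** (C::real^'k^'n) = A ** C + B ** C"
  by (simp add: matrix_matrix_mult_def vec_eq_iff sum.distrib algebra_simps)
lemma mm_neg_right: "(A::real^'n^'m) ** (- (B::real^'k^'n)) = - (A ** B)"
  using mm_scaleR_right[of A "-1" B] by simp
lemma mm_neg_left: "(- (A::real^'n^'m)) ** (B::real^'k^'n) = - (A ** B)"
  using mm_scaleR_left[of "-1" A B] by simp
lemma mm_diff_right: "(A::real^'n^'m) ** ((B::real^'k^'n) - C) = A ** B - A ** C"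
  using mm_add_right[of A B "- C"] mm_neg_right[of A C] by simp
lemma mm_diff_left: "((A::real^'n^'m) - B) ** (C::real^'k^'n) = A ** C - B ** C"
  using mm_add_left[of A "- B" C] mm_neg_left[of B C] by simp
lemma mv_scaleR_left: "(c *\<^sub>R (A::real^'n^'m)) *v (x::real^'n) = c *\<^sub>R (A *v x)"
  by (simp add: matrix_vector_mult_def vec_eq_iff sum_distrib_left algebra_simps)
lemma mv_add_left: "((A::real^'n^'m) + B) *v (x::real^'n) = A *v x + B *v x"
  by (simp add: matrix_vector_mult_def vec_eq_iff sum.distrib algebra_simps)

lemma bl_lmul: "bounded_linear (\<lambda>M::real^'k^'n. (A::real^'n^'m) ** M)"
  by (rule bounded_linear_intro[where K="norm A"])
     (auto simp: mm_scaleR_right mm_add_right, metis norm_mm mult.commute)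
lemma bl_rmul: "bounded_linear (\<lambda>M::real^'n^'m. M ** (B::real^'k^'n))"
  by (rule bounded_linear_intro[where K="norm B"])
     (auto simp: mm_scaleR_left mm_add_left norm_mm)
lemma bl_mv: "bounded_linear (\<lambda>M::real^'n^'m. M *v (x::real^'n))"
  by (rule bounded_linear_intro[where K="norm x"])
     (auto simp: mv_scaleR_left mv_add_left norm_mv)

definition ps :: "(nat \<Rightarrow> real) \<Rightarrow> real \<Rightarrow> real^'n^'n \<Rightarrow> real^'n^'n" where
  "ps a s A = (\<Sum>k. (a k * s ^ k) *\<^sub>R mpow A k)"

definition entire :: "(nat \<Rightarrow> real) \<Rightarrow> bool" where
  "entire a \<longleftrightarrow> (\<forall>x. summable (\<lambda>k. \<bar>a k\<bar> * x ^ k))"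

lemma entire_summable_abs:
  assumes "entire a" shows "summable (\<lambda>k. \<bar>a k * x ^ k\<bar>)"
proof -
  have "summable (\<lambda>k. \<bar>a k\<bar> * \<bar>x\<bar> ^ k)" using assms by (simp add: entire_def)
  then show ?thesis by (simp add: abs_mult power_abs)
qed

lemma ps_summable_norm:
  assumes "entire a"
  shows "summable (\<lambda>k. norm ((a k * s ^ k) *\<^sub>R mpow (A::real^'n^'n) k))"
proof (rule summable_comparison_test)
  let ?N = "norm (mat 1 :: real^'n^'n)"
  show "\<exists>N. \<forall>n\<ge>N. norm (norm ((a n * s ^ n) *\<^sub>R mpow A n)) \<le> ?N * (\<bar>a n\<bar> * (\<bar>s\<bar> * norm A) ^ n)"
  proof (intro exI allI impI)
    fix n
    have "norm (norm ((a n * s ^ n) *\<^sub>R mpow A n)) = \<bar>a n\<bar> * \<bar>s\<bar> ^ n * norm (mpow A n)"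
      by (simp add: abs_mult power_abs)
    also have "\<dots> \<le> \<bar>a n\<bar> * \<bar>s\<bar> ^ n * (?N * norm A ^ n)"
      by (intro mult_left_mono norm_mpow) auto
    finally show "norm (norm ((a n * s ^ n) *\<^sub>R mpow A n)) \<le> ?N * (\<bar>a n\<bar> * (\<bar>s\<bar> * norm A) ^ n)"
      by (simp add: power_mult_distrib mult_ac)
  qed
  show "summable (\<lambda>n. ?N * (\<bar>a n\<bar> * (\<bar>s\<bar> * norm A) ^ n))"
    using assms by (intro summable_mult) (simp add: entire_def)
qed

lemma ps_summable:
  assumes "entire a"
  shows "summable (\<lambda>k. (a k * s ^ k) *\<^sub>R mpow (A::real^'n^'n) k)"
  by (rule summable_norm_cancel[OF ps_summable_norm[OF assms]])

lemma bl_entry: "bounded_linear (\<lambda>M::real^'n^'m. M $ i $ j)"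
  using bounded_linear_compose[OF bounded_linear_vec_nth[of j] bounded_linear_vec_nth[of i]]
  by simp

lemma suminf_entry:
  assumes "summable (f :: nat \<Rightarrow> real^'n^'m)"
  shows "(suminf f) $ i $ j = (\<Sum>k. f k $ i $ j)"
  using bounded_linear.suminf[OF bl_entry assms] by simp

lemma entire_diffs:
  assumes "entire a" shows "entire (diffs a)"
proof -
  have "summable (\<lambda>n. diffs (\<lambda>k. \<bar>a k\<bar>) n * x ^ n)" for x
    by (rule termdiff_converges_all) (use assms in \<open>simp add: entire_def\<close>)
  moreover have "diffs (\<lambda>k. \<bar>a k\<bar>) n = \<bar>diffs a n\<bar>" for n
    by (simp add: diffs_def abs_mult)
  ultimately show ?thesis by (simp add: entire_def)
qed

lemma ps_deriv:
  assumes a: "entire a"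
  shows "((\<lambda>s. ps a s A) has_vector_derivative (A ** ps (diffs a) s (A::real^'n^'n))) (at s)"
proof (rule vd_entries)
  fix i j
  define c where "c k = a k * mpow A k $ i $ j" for k
  have ent: "ps a x A $ i $ j = (\<Sum>k. c k * x ^ k)" for x
    unfolding ps_def c_def by (subst suminf_entry[OF ps_summable[OF a]]) (simp add: algebra_simps)
  have sc: "summable (\<lambda>k. c k * y ^ k)" for y
  proof (rule summable_comparison_test)
    let ?N = "norm (mat 1 :: real^'n^'n)"
    show "\<exists>N. \<forall>n\<ge>N. norm (c n * y ^ n) \<le> norm ((a n * y ^ n) *\<^sub>R mpow A n)"
    proof (intro exI allI impI)
      fix n :: nat
      have "\<bar>a n\<bar> * \<bar>y ^ n\<bar> * \<bar>mpow A n $ i $ j\<bar> \<le> \<bar>a n\<bar> * \<bar>y ^ n\<bar> * norm (mpow A n)"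
        by (intro mult_left_mono entry_le) auto
      then show "norm (c n * y ^ n) \<le> norm ((a n * y ^ n) *\<^sub>R mpow A n)"
        by (simp add: c_def abs_mult mult_ac)
    qed
    show "summable (\<lambda>n. norm ((a n * y ^ n) *\<^sub>R mpow A n))" by (rule ps_summable_norm[OF a])
  qed
  have d: "((\<lambda>x. \<Sum>n. c n * x ^ n) has_field_derivative (\<Sum>n. diffs c n * s ^ n)) (at s)"
    by (rule termdiffs_strong_converges_everywhere[OF sc])
  have dc: "diffs c n = diffs a n * (A ** mpow A n) $ i $ j" for n
    by (simp add: diffs_def c_def)
  have "(A ** ps (diffs a) s A) = (\<Sum>k. A ** ((diffs a k * s ^ k) *\<^sub>R mpow A k))"
    unfolding ps_def
    by (rule bounded_linear.suminf[OF bl_lmul ps_summable[OF entire_diffs[OF a]]])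
  also have "\<dots> = (\<Sum>k. (diffs a k * s ^ k) *\<^sub>R (A ** mpow A k))"
    by (simp add: mm_scaleR_right)
  finally have "(A ** ps (diffs a) s A) $ i $ j = (\<Sum>k. diffs c k * s ^ k)"
    apply (simp only:)
    apply (subst suminf_entry)
    subgoal using bounded_linear.summable[OF bl_lmul ps_summable[OF entire_diffs[OF a], of s A], of A]
      by (simp add: mm_scaleR_right)
    by (simp add: dc mult_ac)
  show "((\<lambda>s. ps a s A $ i $ j) has_real_derivative (A ** ps (diffs a) s A) $ i $ j) (at s)"
    using d unfolding ent \<open>(A ** ps (diffs a) s A) $ i $ j = _\<close> .
qed


lemma bb_mm: "bounded_bilinear (\<lambda>(A::real^'n^'m) (B::real^'k^'n). A ** B)"
  by (rule bounded_bilinear.intro)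
     (auto simp: mm_add_left mm_add_right mm_scaleR_left mm_scaleR_right intro!: exI[of _ 1] norm_mm)

lemma vd_mm:
  fixes F :: "real \<Rightarrow> real^'n^'m" and G :: "real \<Rightarrow> real^'k^'n"
  assumes "(F has_vector_derivative F') (at s within S)" "(G has_vector_derivative G') (at s within S)"
  shows "((\<lambda>x. F x ** G x) has_vector_derivative (F s ** G' + F' ** G s)) (at s within S)"
  using bounded_bilinear.FDERIV[OF bb_mm assms[unfolded has_vector_derivative_def]]
  unfolding has_vector_derivative_def
  by (rule has_derivative_eq_rhs) (simp add: fun_eq_iff mm_scaleR_left mm_scaleR_right scaleR_add_right)

lemma vd_normsq:
  fixes x :: "real \<Rightarrow> 'a::real_inner"
  assumes "(x has_vector_derivative x') (at s)"
  shows "((\<lambda>s. x s \<bullet> x s) has_real_derivative (2 * (x s \<bullet> x'))) (at s)"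
proof -
  have "((\<lambda>s. x s \<bullet> x s) has_derivative (\<lambda>h. x s \<bullet> (h *\<^sub>R x') + (h *\<^sub>R x') \<bullet> x s)) (at s)"
    using bounded_bilinear.FDERIV[OF bounded_bilinear_inner assms[unfolded has_vector_derivative_def]
        assms[unfolded has_vector_derivative_def]] .
  then show ?thesis unfolding has_field_derivative_def
    by (rule has_derivative_eq_rhs) (simp add: fun_eq_iff inner_commute algebra_simps)
qed

lemma gronwall:
  fixes x :: "real \<Rightarrow> 'a::real_inner"
  assumes T: "0 \<le> T" and A: "A \<ge> 0" and B: "B \<ge> 0"
    and d: "\<And>s. s \<in> {0..T} \<Longrightarrow> (x has_vector_derivative x' s) (at s)"
    and b: "\<And>s. s \<in> {0..T} \<Longrightarrow> norm (x' s) \<le> A * norm (x s) + B"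
  shows "norm (x T) ^ 2 \<le> exp ((2*A+1)*T) * (norm (x 0) ^ 2 + B^2 * T)"
proof -
  define c where "c = 2*A+1"
  define g where "g s = exp (- c * s) * (x s \<bullet> x s) - B^2 * s" for s
  have "g T \<le> g 0"
  proof (rule DERIV_nonpos_imp_nonincreasing[OF T])
    fix s assume s0: "0 \<le> s" and sT: "s \<le> T"
    have xs: "s \<in> {0..T}" using s0 sT by auto
    have dg: "DERIV g s :> exp (- c * s) * (2 * (x s \<bullet> x' s)) + (- c * exp (- c * s)) * (x s \<bullet> x s) - B^2"
      unfolding g_def
      by (auto intro!: derivative_eq_intros vd_normsq[OF d[OF xs]])
    have "2 * (x s \<bullet> x' s) \<le> 2 * (norm (x s) * norm (x' s))"
      using Cauchy_Schwarz_ineq2[of "x s" "x' s"] by (simp add: abs_le_iff)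
    also have "\<dots> \<le> 2 * (norm (x s) * (A * norm (x s) + B))"
      using b[OF xs] by (simp add: mult_left_mono)
    also have "\<dots> \<le> c * (x s \<bullet> x s) + B^2"
    proof -
      have "2 * norm (x s) * B \<le> norm (x s)^2 + B^2"
        using sum_squares_bound[of "norm (x s)" B] by (simp add: power2_eq_square mult_ac)
      then show ?thesis
        by (simp add: c_def power2_norm_eq_inner[symmetric] power2_eq_square algebra_simps)
    qed
    finally have h: "2 * (x s \<bullet> x' s) \<le> c * (x s \<bullet> x s) + B^2" .
    have "0 \<le> c * s" using s0 A by (simp add: c_def)
    then have e1: "exp (- c * s) \<le> 1" by simp
    have "exp (- c * s) * (2 * (x s \<bullet> x' s)) \<le> exp (- c * s) * (c * (x s \<bullet> x s) + B^2)"
      using h by (simp add: mult_left_mono)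
    moreover have "exp (- c * s) * B^2 \<le> B^2" using e1 by (simp add: mult_left_le_one_le)
    ultimately have "exp (- c * s) * (2 * (x s \<bullet> x' s)) + (- c * exp (- c * s)) * (x s \<bullet> x s) - B^2 \<le> 0"
      by (simp add: algebra_simps)
    then show "\<exists>y. DERIV g s :> y \<and> y \<le> 0" using dg by blast
  qed
  then have "exp (- c * T) * norm (x T)^2 \<le> norm (x 0)^2 + B^2 * T"
    by (simp add: g_def power2_norm_eq_inner)
  then have "exp (c*T) * (exp (- c * T) * norm (x T)^2) \<le> exp (c*T) * (norm (x 0)^2 + B^2 * T)"
    by (simp add: mult_left_mono)
  moreover have "exp (c*T) * (exp (- c * T) * norm (x T)^2) = norm (x T)^2"
    by (simp add: mult.assoc[symmetric] exp_add[symmetric])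
  ultimately have "norm (x T)^2 \<le> exp (c*T) * (norm (x 0)^2 + B^2 * T)" by linarith
  then show ?thesis unfolding c_def .
qed


lemma gronwall2:
  fixes x :: "real \<Rightarrow> 'a::real_inner"
  assumes T: "0 \<le> T" and A: "A \<ge> 0" and B: "B \<ge> 0" and rho: "\<rho> > 0"
    and d: "\<And>s. s \<in> {0..T} \<Longrightarrow> (x has_vector_derivative x' s) (at s)"
    and b: "\<And>s. s \<in> {0..T} \<Longrightarrow> norm (x s) \<le> \<rho> \<Longrightarrow> norm (x' s) \<le> A * norm (x s) + B"
    and small: "exp ((2*A+1)*T) * (norm (x 0) ^ 2 + B^2 * T) < \<rho>^2"
  shows "\<forall>s\<in>{0..T}. norm (x s) < \<rho>"
proof (rule ccontr)
  define c where "c = 2*A+1"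
  assume "\<not> (\<forall>s\<in>{0..T}. norm (x s) < \<rho>)"
  then obtain s1 where s1: "s1 \<in> {0..T}" "\<rho> \<le> norm (x s1)" by force
  have cont: "continuous_on {0..T} x"
    using d by (meson continuous_at_imp_continuous_on has_vector_derivative_continuous)
  have cn: "continuous_on {0..u} (\<lambda>s. norm (x s))" if "u \<le> T" for u
    using continuous_on_norm[OF continuous_on_subset[OF cont]] that by auto
  have e1: "1 \<le> exp (c*T)" using T A by (simp add: c_def)
  have "norm (x 0)^2 \<le> exp (c*T) * (norm (x 0) ^ 2 + B^2 * T)"
  proof -
    have "norm (x 0)^2 \<le> norm (x 0) ^ 2 + B^2 * T" using T by simp
    also have "\<dots> \<le> exp (c*T) * (norm (x 0) ^ 2 + B^2 * T)"
    proof -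
      have "0 \<le> (exp (c*T) - 1) * (norm (x 0) ^ 2 + B^2 * T)"
        using e1 T by (intro mult_nonneg_nonneg) auto
      then show ?thesis by (simp add: algebra_simps)
    qed
    finally show ?thesis .
  qed
  with small have "norm (x 0)^2 < \<rho>^2" by (simp add: c_def)
  then have x0: "norm (x 0) < \<rho>" using rho by (smt (verit) power_mono norm_ge_zero)
  define S where "S = {0..T} \<inter> (\<lambda>s. norm (x s)) -` {\<rho>}"
  have "\<exists>w. 0 \<le> w \<and> w \<le> s1 \<and> norm (x w) = \<rho>"
    using IVT'[of "\<lambda>s. norm (x s)" 0 \<rho> s1] x0 s1 cn[of s1] by auto
  then obtain w where "0 \<le> w" "w \<le> s1" "norm (x w) = \<rho>" by blast
  then have "w \<in> S" using s1 by (auto simp: S_def)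
  then have Sne: "S \<noteq> {}" by blast
  have Scl: "closed S" unfolding S_def
    by (rule continuous_closed_preimage[OF continuous_on_norm[OF cont]]) auto
  have Sbdd: "bdd_below S" by (auto simp: S_def bdd_below_def)
  define w0 where "w0 = Inf S"
  have w0S: "w0 \<in> S" unfolding w0_def by (rule closed_contains_Inf[OF Sne Sbdd Scl])
  have w0T: "0 \<le> w0" "w0 \<le> T" and xw0: "norm (x w0) = \<rho>" using w0S by (auto simp: S_def)
  have le: "norm (x u) \<le> \<rho>" if u: "u \<in> {0..w0}" for u
  proof (rule ccontr)
    assume "\<not> norm (x u) \<le> \<rho>"
    then obtain w where w: "0 \<le> w" "w \<le> u" "norm (x w) = \<rho>"
      using IVT'[of "\<lambda>s. norm (x s)" 0 \<rho> u] x0 u cn[of u] w0T by fastforce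
    then have "w \<in> S" using u w0T by (auto simp: S_def)
    then have "w0 \<le> w" unfolding w0_def by (rule cInf_lower[OF _ Sbdd])
    then have "w = u" "u = w0" using w u by auto
    then show False using w \<open>\<not> norm (x u) \<le> \<rho>\<close> by simp
  qed
  have "norm (x w0) ^ 2 \<le> exp ((2*A+1)*w0) * (norm (x 0) ^ 2 + B^2 * w0)"
    by (rule gronwall[OF w0T(1) A B, of x x']) (use d b le w0T in auto)
  also have "\<dots> \<le> exp ((2*A+1)*T) * (norm (x 0) ^ 2 + B^2 * T)"
    using w0T A by (intro mult_mono add_left_mono) (auto intro!: mult_left_mono)
  finally have "\<rho>^2 < \<rho>^2" using small xw0 by simp
  then show False by simp
qed


lemma psM_summable_norm:
  assumes "entire a" and M: "\<And>k. norm (M k) \<le> C * L ^ k"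
  shows "summable (\<lambda>k. norm ((a k * s ^ k) *\<^sub>R (M k :: 'v::real_normed_vector)))"
proof (rule summable_comparison_test)
  show "\<exists>N. \<forall>n\<ge>N. norm (norm ((a n * s ^ n) *\<^sub>R M n)) \<le> C * (\<bar>a n\<bar> * (\<bar>s\<bar> * L) ^ n)"
  proof (intro exI allI impI)
    fix n
    have "norm (norm ((a n * s ^ n) *\<^sub>R M n)) = \<bar>a n\<bar> * \<bar>s\<bar> ^ n * norm (M n)"
      by (simp add: abs_mult power_abs)
    also have "\<dots> \<le> \<bar>a n\<bar> * \<bar>s\<bar> ^ n * (C * L ^ n)"
      by (intro mult_left_mono M) auto
    finally show "norm (norm ((a n * s ^ n) *\<^sub>R M n)) \<le> C * (\<bar>a n\<bar> * (\<bar>s\<bar> * L) ^ n)"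
      by (simp add: power_mult_distrib mult_ac)
  qed
  show "summable (\<lambda>n. C * (\<bar>a n\<bar> * (\<bar>s\<bar> * L) ^ n))"
    using assms by (intro summable_mult) (simp add: entire_def)
qed

lemma psM_summable:
  assumes "entire a" and M: "\<And>k. norm (M k) \<le> C * L ^ k"
  shows "summable (\<lambda>k. (a k * s ^ k) *\<^sub>R (M k :: 'v::banach))"
  by (rule summable_norm_cancel[OF psM_summable_norm[OF assms]])

lemma psM_deriv:
  fixes M :: "nat \<Rightarrow> real^'n^'m"
  assumes a: "entire a" and M: "\<And>k. norm (M k) \<le> C * L ^ k"
  shows "((\<lambda>s. \<Sum>k. (a k * s ^ k) *\<^sub>R M k) has_vector_derivative
           (\<Sum>k. (diffs a k * s ^ k) *\<^sub>R M (Suc k))) (at s)"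
proof (rule vd_entries)
  fix i j
  define c where "c k = a k * M k $ i $ j" for k
  have ent: "(\<Sum>k. (a k * x ^ k) *\<^sub>R M k) $ i $ j = (\<Sum>k. c k * x ^ k)" for x
    unfolding c_def by (subst suminf_entry[OF psM_summable[OF a M]]) (simp add: algebra_simps)
  have sc: "summable (\<lambda>k. c k * y ^ k)" for y
  proof (rule summable_comparison_test)
    show "\<exists>N. \<forall>n\<ge>N. norm (c n * y ^ n) \<le> norm ((a n * y ^ n) *\<^sub>R M n)"
    proof (intro exI allI impI)
      fix n :: nat
      have "\<bar>a n\<bar> * \<bar>y ^ n\<bar> * \<bar>M n $ i $ j\<bar> \<le> \<bar>a n\<bar> * \<bar>y ^ n\<bar> * norm (M n)"
        by (intro mult_left_mono entry_le) auto
      then show "norm (c n * y ^ n) \<le> norm ((a n * y ^ n) *\<^sub>R M n)"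
        by (simp add: c_def abs_mult mult_ac)
    qed
    show "summable (\<lambda>n. norm ((a n * y ^ n) *\<^sub>R M n))" by (rule psM_summable_norm[OF a M])
  qed
  have d: "((\<lambda>x. \<Sum>n. c n * x ^ n) has_field_derivative (\<Sum>n. diffs c n * s ^ n)) (at s)"
    by (rule termdiffs_strong_converges_everywhere[OF sc])
  have dc: "diffs c n = diffs a n * M (Suc n) $ i $ j" for n
    by (simp add: diffs_def c_def)
  have M': "norm (M (Suc k)) \<le> (C * L) * L ^ k" for k using M[of "Suc k"] by (simp add: mult_ac)
  have "(\<Sum>k. (diffs a k * s ^ k) *\<^sub>R M (Suc k)) $ i $ j = (\<Sum>k. diffs c k * s ^ k)"
    by (subst suminf_entry[OF psM_summable[OF entire_diffs[OF a] M']]) (simp add: dc mult_ac)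
  then show "((\<lambda>s. (\<Sum>k. (a k * s ^ k) *\<^sub>R M k) $ i $ j) has_real_derivative
      (\<Sum>k. (diffs a k * s ^ k) *\<^sub>R M (Suc k)) $ i $ j) (at s)"
    using d unfolding ent by simp
qed


lemma mpow_bound:
  assumes "j \<le> k"
  shows "norm (mpow D j) \<le> norm (mat 1 :: real^'n^'n) * (norm (D::real^'n^'n) + 1) ^ k"
proof -
  have "norm D ^ j \<le> (norm D + 1) ^ j" by (intro power_mono) auto
  also have "\<dots> \<le> (norm D + 1) ^ k" using assms by (intro power_increasing) auto
  finally have "norm (mat 1 :: real^'n^'n) * norm D ^ j \<le> norm (mat 1 :: real^'n^'n) * (norm D + 1) ^ k"
    by (intro mult_left_mono) auto
  then show ?thesis using norm_mpow[of D j] by linarith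
qed

lemma mpow_bound0: "norm (mpow D k) \<le> norm (mat 1 :: real^'n^'n) * (norm (D::real^'n^'n) + 1) ^ k"
  by (rule mpow_bound) simp
lemma mpow_bound1: "norm (mpow D (k - 1)) \<le> norm (mat 1 :: real^'n^'n) * (norm (D::real^'n^'n) + 1) ^ k"
  by (rule mpow_bound) simp

lemma mpow_comm: "mpow D k ** D = D ** mpow (D::real^'n^'n) k"
  by (induction k) (simp_all add: matrix_mul_assoc[symmetric])

lemma entire_le_fact:
  assumes "\<And>k. \<bar>a k\<bar> \<le> 1 / fact k"
  shows "entire a"
  unfolding entire_def
proof
  fix x :: real
  show "summable (\<lambda>k. \<bar>a k\<bar> * x ^ k)"
  proof (rule summable_comparison_test)
    show "\<exists>N. \<forall>n\<ge>N. norm (\<bar>a n\<bar> * x ^ n) \<le> inverse (fact n) * \<bar>x\<bar> ^ n"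
      using assms by (auto simp: abs_mult power_abs divide_inverse intro!: mult_right_mono)
    show "summable (\<lambda>n. inverse (fact n) * \<bar>x\<bar> ^ n)" by (rule summable_exp)
  qed
qed

lemma lmul_suminf:
  assumes "summable (\<lambda>k. c k *\<^sub>R (M k :: real^'n^'m))"
  shows "(A::real^'m^'p) ** (\<Sum>k. c k *\<^sub>R M k) = (\<Sum>k. c k *\<^sub>R (A ** M k))"
  using bounded_linear.suminf[OF bl_lmul assms, of A] by (simp add: mm_scaleR_right)

lemma rmul_suminf:
  assumes "summable (\<lambda>k. c k *\<^sub>R (M k :: real^'n^'m))"
  shows "(\<Sum>k. c k *\<^sub>R M k) ** (B::real^'p^'n) = (\<Sum>k. c k *\<^sub>R (M k ** B))"
  using bounded_linear.suminf[OF bl_rmul assms, of B] by (simp add: mm_scaleR_left)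

definition ae :: "nat \<Rightarrow> real" where "ae k = (-1) ^ k / fact k"
definition ab :: "nat \<Rightarrow> real" where "ab k = (if k = 0 then 0 else (-1) ^ (k - 1) / fact k)"
definition Phi :: "real^'n^'n \<Rightarrow> real \<Rightarrow> real^'n^'n" where
  "Phi D s = (\<Sum>k. (ae k * s ^ k) *\<^sub>R mpow D k)"
definition Psi :: "real^'n^'n \<Rightarrow> real \<Rightarrow> real^'n^'n" where
  "Psi D s = (\<Sum>k. (ab k * s ^ k) *\<^sub>R mpow D (k - 1))"

lemma entire_ae: "entire ae"
  by (rule entire_le_fact) (simp add: ae_def abs_divide)
lemma entire_ab: "entire ab"
  by (rule entire_le_fact) (simp add: ab_def abs_divide)
lemma diffs_ae: "diffs ae = (\<lambda>n. - ae n)"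
  by (simp add: fun_eq_iff diffs_def ae_def divide_simps del: fact_Suc) (simp add: algebra_simps)
lemma diffs_ab: "diffs ab = ae"
  by (simp add: fun_eq_iff diffs_def ae_def ab_def divide_simps del: fact_Suc) (simp add: algebra_simps)

lemma Phi_summable: "summable (\<lambda>k. (ae k * s ^ k) *\<^sub>R mpow (D::real^'n^'n) k)"
  by (rule psM_summable[OF entire_ae mpow_bound0])
lemma Psi_summable: "summable (\<lambda>k. (ab k * s ^ k) *\<^sub>R mpow (D::real^'n^'n) (k - 1))"
  by (rule psM_summable[OF entire_ab mpow_bound1])

lemma Phi_deriv: "((\<lambda>s. Phi D s) has_vector_derivative (- (D ** Phi D s))) (at s)"
proof -
  have "((\<lambda>s. Phi D s) has_vector_derivative (\<Sum>k. (diffs ae k * s ^ k) *\<^sub>R mpow D (Suc k))) (at s)"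
    unfolding Phi_def by (rule psM_deriv[OF entire_ae mpow_bound0])
  also have "(\<Sum>k. (diffs ae k * s ^ k) *\<^sub>R mpow D (Suc k)) = - (\<Sum>k. (ae k * s ^ k) *\<^sub>R (D ** mpow D k))"
    by (simp add: diffs_ae suminf_minus[symmetric] bounded_linear.summable[OF bl_lmul Phi_summable, simplified mm_scaleR_right])
  also have "\<dots> = - (D ** Phi D s)"
    unfolding Phi_def by (simp add: lmul_suminf[OF Phi_summable])
  finally show ?thesis .
qed

lemma Psi_deriv: "((\<lambda>s. Psi D s) has_vector_derivative Phi D s) (at s)"
proof -
  have "((\<lambda>s. Psi D s) has_vector_derivative (\<Sum>k. (diffs ab k * s ^ k) *\<^sub>R mpow D (Suc k - 1))) (at s)"
    unfolding Psi_def by (rule psM_deriv[OF entire_ab mpow_bound1])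
  then show ?thesis by (simp add: diffs_ab Phi_def)
qed

lemma Phi_0: "Phi D 0 = mat 1"
proof -
  have "Phi D 0 = (\<Sum>k\<in>{0}. (ae k * 0 ^ k) *\<^sub>R mpow D k)"
    unfolding Phi_def by (rule suminf_finite) auto
  then show ?thesis by (simp add: ae_def)
qed

lemma Psi_0: "Psi D 0 = 0"
proof -
  have "Psi D 0 = (\<Sum>k\<in>{}. (ab k * 0 ^ k) *\<^sub>R mpow D (k - 1))"
    unfolding Psi_def by (rule suminf_finite) (auto simp: ab_def)
  then show ?thesis by simp
qed

lemma Phi_comm: "D ** Phi D s = Phi D s ** D"
  unfolding Phi_def by (simp add: lmul_suminf[OF Phi_summable] rmul_suminf[OF Phi_summable] mpow_comm)

lemma Phi_Psi: "Phi D s + D ** Psi D s = mat 1"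
proof -
  have e: "0 < k \<Longrightarrow> D ** mpow D (k - Suc 0) = mpow D k" for k
    by (cases k) auto
  have "D ** Psi D s = (\<Sum>k. (ab k * s ^ k) *\<^sub>R mpow D k)"
    unfolding Psi_def lmul_suminf[OF Psi_summable] by (rule suminf_cong) (auto simp: e ab_def)
  then have "Phi D s + D ** Psi D s = (\<Sum>k. (ae k * s ^ k) *\<^sub>R mpow D k + (ab k * s ^ k) *\<^sub>R mpow D k)"
    unfolding Phi_def
    by (simp add: suminf_add[OF Phi_summable psM_summable[OF entire_ab mpow_bound0]])
  also have "\<dots> = (\<Sum>k. ((ae k + ab k) * s ^ k) *\<^sub>R mpow D k)"
    by (simp add: scaleR_add_left algebra_simps)
  also have "\<dots> = (\<Sum>k\<in>{0}. ((ae k + ab k) * s ^ k) *\<^sub>R mpow D k)"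
  proof (rule suminf_finite)
    fix k :: nat assume "k \<notin> {0}"
    then obtain m where k: "k = Suc m" by (cases k) auto
    show "((ae k + ab k) * s ^ k) *\<^sub>R mpow D k = 0"
      by (simp add: k ae_def ab_def add_divide_distrib[symmetric])
  qed simp
  finally show ?thesis by (simp add: ae_def ab_def)
qed

lemma Phi_eq: "mat_series (expneg_coeff s) D = Phi D s"
  unfolding mat_series_def Phi_def expneg_coeff_def ae_def
  by (simp add: power_minus[of s] mult_ac)

lemma Psi_eq: "mat_series (oneminusexp_div_coeff s) D = Psi D s"
proof -
  have "Psi D s = (\<Sum>j. (ab (Suc j) * s ^ Suc j) *\<^sub>R mpow D (Suc j - 1))"
    unfolding Psi_def by (subst suminf_split_head[OF Psi_summable]) (simp add: ab_def)
  then show ?thesis unfolding mat_series_def oneminusexp_div_coeff_def ab_def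
    by (simp add: mult_ac)
qed


lemma vec_alg1: "- X + - X - 2 *\<^sub>R (- Y) = (-2) *\<^sub>R (X - (Y::'a::real_vector))"
  by (simp add: scaleR_diff_right scaleR_2)

lemma zero_ode:
  fixes x :: "real \<Rightarrow> 'a::real_inner"
  assumes T: "0 \<le> T" and A: "A \<ge> 0" and x0: "x 0 = 0"
    and d: "\<And>s. s \<in> {0..T} \<Longrightarrow> (x has_vector_derivative x' s) (at s)"
    and b: "\<And>s. s \<in> {0..T} \<Longrightarrow> norm (x' s) \<le> A * norm (x s)"
  shows "x T = 0"
proof -
  have "norm (x T) ^ 2 \<le> exp ((2*A+1)*T) * (norm (x 0) ^ 2 + 0^2 * T)"
    by (rule gronwall[OF T A _ d]) (use b in auto)
  then show ?thesis using x0 by simp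
qed

lemma Phi_double:
  assumes "0 \<le> t"
  shows "Phi D t ** Phi D t = Phi D (2 * t)"
proof -
  define W where "W \<tau> = Phi D \<tau> ** Phi D \<tau> - Phi D (2 * \<tau>)" for \<tau>
  have "W t = 0"
  proof (rule zero_ode[OF assms, of "2 * norm D"])
    show "W 0 = 0" by (simp add: W_def Phi_0)
    fix \<tau>
    have c2: "((\<lambda>\<tau>. Phi D (2 * \<tau>)) has_vector_derivative 2 *\<^sub>R (- (D ** Phi D (2 * \<tau>)))) (at \<tau>)"
      using vector_diff_chain_at[of "\<lambda>\<tau>. 2 * \<tau>" 2 \<tau> "Phi D", OF _ Phi_deriv]
      by (simp add: o_def has_vector_derivative_def has_derivative_mult_right[OF has_derivative_ident] mult_commute_abs)
    have "(W has_vector_derivative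
        (Phi D \<tau> ** (- (D ** Phi D \<tau>)) + (- (D ** Phi D \<tau>)) ** Phi D \<tau> - 2 *\<^sub>R (- (D ** Phi D (2 * \<tau>))))) (at \<tau>)"
      unfolding W_def by (intro has_vector_derivative_diff vd_mm Phi_deriv c2)
    also have "Phi D \<tau> ** (- (D ** Phi D \<tau>)) + (- (D ** Phi D \<tau>)) ** Phi D \<tau> - 2 *\<^sub>R (- (D ** Phi D (2 * \<tau>)))
        = (-2) *\<^sub>R (D ** W \<tau>)"
    proof -
      have "Phi D \<tau> ** (D ** Phi D \<tau>) = D ** (Phi D \<tau> ** Phi D \<tau>)"
        by (metis matrix_mul_assoc Phi_comm)
      moreover have "(D ** Phi D \<tau>) ** Phi D \<tau> = D ** (Phi D \<tau> ** Phi D \<tau>)"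
        by (simp add: matrix_mul_assoc)
      ultimately show ?thesis
        by (simp only: W_def mm_diff_right mm_neg_left mm_neg_right vec_alg1)
    qed
    finally show "(W has_vector_derivative (-2) *\<^sub>R (D ** W \<tau>)) (at \<tau>)" .
    show "norm ((-2) *\<^sub>R (D ** W \<tau>)) \<le> 2 * norm D * norm (W \<tau>)"
      using norm_mm[of D "W \<tau>"] by (simp add: mult.assoc)
  qed auto
  then show ?thesis by (simp add: W_def)
qed


lemma bl_transpose: "bounded_linear (transpose :: real^'n^'m \<Rightarrow> real^'m^'n)"
  by (rule bounded_linear_intro[where K=1])
     (simp_all add: norm_transpose, simp_all add: transpose_def vec_eq_iff)

lemma Phi_orth:
  assumes Dt: "transpose D = - D" and t: "0 \<le> t"
  shows "transpose (Phi D t) ** Phi D t = mat 1"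
proof -
  define Ot where "Ot \<tau> = transpose (Phi D \<tau>) ** Phi D \<tau> - mat 1" for \<tau>
  have "Ot t = 0"
  proof (rule zero_ode[OF t order_refl])
    show "Ot 0 = 0" by (simp add: Ot_def Phi_0)
    fix \<tau>
    have dt: "((\<lambda>\<tau>. transpose (Phi D \<tau>)) has_vector_derivative transpose (- (D ** Phi D \<tau>))) (at \<tau>)"
      by (rule bounded_linear.has_vector_derivative[OF bl_transpose Phi_deriv])
    have tr: "transpose (- (D ** Phi D \<tau>)) = transpose (Phi D \<tau>) ** D"
    proof -
      have "transpose (- (D ** Phi D \<tau>)) = - transpose (D ** Phi D \<tau>)"
        by (simp add: transpose_def vec_eq_iff)
      also have "\<dots> = - (transpose (Phi D \<tau>) ** (- D))"
        by (simp only: matrix_transpose_mul Dt)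
      finally show ?thesis by (simp only: mm_neg_right minus_minus)
    qed
    have "(Ot has_vector_derivative
        (transpose (Phi D \<tau>) ** (- (D ** Phi D \<tau>)) + transpose (- (D ** Phi D \<tau>)) ** Phi D \<tau> - 0)) (at \<tau>)"
      unfolding Ot_def by (intro has_vector_derivative_diff vd_mm Phi_deriv dt has_vector_derivative_const)
    also have "transpose (Phi D \<tau>) ** (- (D ** Phi D \<tau>)) + transpose (- (D ** Phi D \<tau>)) ** Phi D \<tau> - 0 = 0"
      unfolding tr by (simp add: mm_neg_right matrix_mul_assoc)
    finally show "(Ot has_vector_derivative 0) (at \<tau>)" .
  qed auto
  then show ?thesis by (simp add: Ot_def)
qed


definition ash :: "nat \<Rightarrow> real" where "ash k = (if odd k then (1/2) ^ (k - 1) / fact k else 0)"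
definition ac :: "nat \<Rightarrow> real" where "ac k = (if even k then (1/2) ^ k / fact k else 0)"
definition Sh :: "real^'n^'n \<Rightarrow> real \<Rightarrow> real^'n^'n" where
  "Sh D s = (\<Sum>k. (ash k * s ^ k) *\<^sub>R mpow D (k - 1))"
definition Ch :: "real^'n^'n \<Rightarrow> real \<Rightarrow> real^'n^'n" where
  "Ch D s = (\<Sum>k. (ac k * s ^ k) *\<^sub>R mpow D k)"

lemma entire_ash: "entire ash"
proof (rule entire_le_fact)
  fix k
  have "(1/2::real) ^ (k - 1) \<le> 1" by (rule power_le_one) auto
  then show "\<bar>ash k\<bar> \<le> 1 / fact k" by (simp add: ash_def abs_divide divide_right_mono)
qed
lemma entire_ac: "entire ac"
proof (rule entire_le_fact)
  fix k
  have "(1/2::real) ^ k \<le> 1" by (rule power_le_one) auto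
  then show "\<bar>ac k\<bar> \<le> 1 / fact k" by (simp add: ac_def abs_divide divide_right_mono)
qed
lemma diffs_ash: "diffs ash = ac"
  by (simp add: fun_eq_iff diffs_def ash_def ac_def divide_simps del: fact_Suc) (simp add: algebra_simps)

lemma Sh_summable: "summable (\<lambda>k. (ash k * s ^ k) *\<^sub>R mpow (D::real^'n^'n) (k - 1))"
  by (rule psM_summable[OF entire_ash mpow_bound1])
lemma Ch_summable: "summable (\<lambda>k. (ac k * s ^ k) *\<^sub>R mpow (D::real^'n^'n) k)"
  by (rule psM_summable[OF entire_ac mpow_bound0])

lemma Sh_deriv: "((\<lambda>s. Sh D s) has_vector_derivative Ch D s) (at s)"
proof -
  have "((\<lambda>s. Sh D s) has_vector_derivative (\<Sum>k. (diffs ash k * s ^ k) *\<^sub>R mpow D (Suc k - 1))) (at s)"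
    unfolding Sh_def by (rule psM_deriv[OF entire_ash mpow_bound1])
  then show ?thesis by (simp add: diffs_ash Ch_def)
qed

lemma Sh_0: "Sh D 0 = 0"
proof -
  have "Sh D 0 = (\<Sum>k\<in>{}. (ash k * 0 ^ k) *\<^sub>R mpow D (k - 1))"
    unfolding Sh_def by (rule suminf_finite) (auto simp: ash_def odd_pos)
  then show ?thesis by simp
qed

lemma Ch_Sh: "Ch D s - (1/2) *\<^sub>R (D ** Sh D s) = Phi D (s/2)"
proof -
  have e: "0 < k \<Longrightarrow> D ** mpow D (k - Suc 0) = mpow D k" for k
    by (cases k) auto
  have "D ** Sh D s = (\<Sum>k. (ash k * s ^ k) *\<^sub>R mpow D k)"
    unfolding Sh_def lmul_suminf[OF Sh_summable] by (rule suminf_cong) (auto simp: e ash_def odd_pos)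
  then have h: "(1/2) *\<^sub>R (D ** Sh D s) = (\<Sum>k. (1/2) *\<^sub>R ((ash k * s ^ k) *\<^sub>R mpow D k))"
    by (simp only: suminf_scaleR_right[OF psM_summable[OF entire_ash mpow_bound0]])
  have sm: "summable (\<lambda>k. (1/2::real) *\<^sub>R ((ash k * s ^ k) *\<^sub>R mpow D k))"
    by (rule summable_scaleR_right[OF psM_summable[OF entire_ash mpow_bound0]])
  have "Ch D s - (1/2) *\<^sub>R (D ** Sh D s)
      = (\<Sum>k. (ac k * s ^ k) *\<^sub>R mpow D k - (1/2) *\<^sub>R ((ash k * s ^ k) *\<^sub>R mpow D k))"
    unfolding Ch_def h by (rule suminf_diff[OF Ch_summable sm])
  also have "\<dots> = (\<Sum>k. (ae k * (s/2) ^ k) *\<^sub>R mpow D k)"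
  proof (rule suminf_cong)
    fix k
    have "ac k - ash k / 2 = ae k * (1/2) ^ k"
    proof (cases "even k")
      case True then show ?thesis by (simp add: ac_def ash_def ae_def)
    next
      case False
      then obtain m where k: "k = Suc (2*m)" by (metis oddE Suc_eq_plus1)
      show ?thesis by (simp add: k ac_def ash_def ae_def)
    qed
    then show "(ac k * s ^ k) *\<^sub>R mpow D k - (1/2) *\<^sub>R ((ash k * s ^ k) *\<^sub>R mpow D k)
        = (ae k * (s/2) ^ k) *\<^sub>R mpow D k"
      by (simp add: scaleR_diff_left[symmetric] power_divide algebra_simps)
  qed
  finally show ?thesis by (simp add: Phi_def)
qed


lemma Psi_factor: "Psi D 1 = Phi D (1/2) ** Sh D 1"
proof -
  define Z where "Z s = Phi D (s/2) ** Sh D s - Psi D s" for s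
  have "Z 1 = 0"
  proof (rule zero_ode[of 1 0 Z "\<lambda>_. 0"])
    show "Z 0 = 0" by (simp add: Z_def Sh_0 Psi_0)
    fix s :: real assume s: "s \<in> {0..1}"
    have c2: "((\<lambda>s. Phi D (s/2)) has_vector_derivative (1/2) *\<^sub>R (- (D ** Phi D (s/2)))) (at s)"
    proof -
      have "((\<lambda>s. s/2) has_real_derivative 1/2) (at s)"
        by (auto intro!: derivative_eq_intros)
      then have "((\<lambda>s::real. s/2) has_vector_derivative 1/2) (at s)"
        by (simp add: has_real_derivative_iff_has_vector_derivative)
      from vector_diff_chain_at[OF this Phi_deriv] show ?thesis by (simp add: o_def)
    qed
    have "(Z has_vector_derivative
        (Phi D (s/2) ** Ch D s + ((1/2) *\<^sub>R (- (D ** Phi D (s/2)))) ** Sh D s - Phi D s)) (at s)"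
      unfolding Z_def by (intro has_vector_derivative_diff vd_mm Sh_deriv c2 Psi_deriv)
    also have "Phi D (s/2) ** Ch D s + ((1/2) *\<^sub>R (- (D ** Phi D (s/2)))) ** Sh D s
        = Phi D (s/2) ** (Ch D s - (1/2) *\<^sub>R (D ** Sh D s))"
    proof -
      have "(D ** Phi D (s/2)) ** Sh D s = Phi D (s/2) ** (D ** Sh D s)"
        by (metis matrix_mul_assoc Phi_comm)
      then show ?thesis
        by (simp add: mm_scaleR_left mm_scaleR_right mm_neg_left mm_diff_right)
    qed
    also have "\<dots> = Phi D s"
      using Phi_double[of "s/2" D] s by (simp add: Ch_Sh)
    finally show "(Z has_vector_derivative 0) (at s)" by simp
  qed auto
  then show ?thesis by (simp add: Z_def)
qed

lemma Sh_1: "Sh D 1 = mat_series sinhc_half_coeff D"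
proof -
  have "Sh D 1 = (\<Sum>j. (ash (Suc j) * 1 ^ Suc j) *\<^sub>R mpow D (Suc j - 1))"
    unfolding Sh_def by (subst suminf_split_head[OF Sh_summable]) (simp add: ash_def)
  also have "\<dots> = (\<Sum>j. sinhc_half_coeff j *\<^sub>R mpow D j)"
  proof (rule suminf_cong)
    fix j
    show "(ash (Suc j) * 1 ^ Suc j) *\<^sub>R mpow D (Suc j - 1) = sinhc_half_coeff j *\<^sub>R mpow D j"
      unfolding ash_def sinhc_half_coeff_def by auto
  qed
  finally show ?thesis unfolding mat_series_def .
qed

lemma det_Psi:
  assumes Dt: "transpose D = - D"
  shows "det (Psi D 1) = det (mat_series sinhc_half_coeff D)"
proof -
  have h: "Phi D (1/2) = Phi D (1/4) ** Phi D (1/4)"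
    using Phi_double[of "1/4" D] by simp
  have "det (Phi D (1/2)) = det (Phi D (1/4)) ^ 2"
    unfolding h by (simp add: det_mul power2_eq_square)
  then have nn: "det (Phi D (1/2)) \<ge> 0" by simp
  have "det (transpose (Phi D (1/2)) ** Phi D (1/2)) = 1"
    using Phi_orth[OF Dt, of "1/2"] by simp
  then have "det (Phi D (1/2)) * det (Phi D (1/2)) = 1" by (simp add: det_mul det_transpose)
  with nn have "det (Phi D (1/2)) = 1"
    using power2_eq_1_iff[of "det (Phi D (1/2))"] by (auto simp: power2_eq_square)
  then show ?thesis by (simp add: Psi_factor det_mul Sh_1)
qed


definition fc :: "complex \<Rightarrow> complex" where
  "fc z = (if z = 0 then 1 else z * cos z / sin z)"

lemma sin_nz: "norm (z::complex) < pi \<Longrightarrow> z \<noteq> 0 \<Longrightarrow> sin z \<noteq> 0"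
proof
  assume z: "norm z < pi" "z \<noteq> 0" and "sin z = 0"
  then obtain n :: int where n: "z = of_real (n * pi)" by (auto simp: sin_eq_0)
  with z have "n \<noteq> 0" by auto
  then have "1 \<le> \<bar>real_of_int n\<bar>" by linarith
  then have "pi \<le> \<bar>real_of_int n\<bar> * pi" by simp
  also have "\<dots> = norm z" unfolding n norm_of_real by (simp add: abs_mult)
  finally show False using z by simp
qed

lemma fc_lim: "(fc \<longlongrightarrow> 1) (at 0)"
proof -
  have "(sin has_field_derivative cos 0) (at (0::complex))" by (rule DERIV_sin)
  then have "((\<lambda>y. (sin y - sin 0) / (y - 0)) \<longlongrightarrow> cos 0) (at (0::complex))"
    by (simp only: has_field_derivative_iff)
  then have s: "((\<lambda>y. sin y / y) \<longlongrightarrow> 1) (at (0::complex))" by simp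
  have "((\<lambda>y. cos y / (sin y / y)) \<longlongrightarrow> cos 0 / 1) (at (0::complex))"
    by (intro tendsto_intros s) auto
  then have "((\<lambda>y. cos y / (sin y / y)) \<longlongrightarrow> 1) (at (0::complex))" by simp
  moreover have "\<forall>\<^sub>F y in at (0::complex). cos y / (sin y / y) = fc y"
    unfolding eventually_at
  proof (intro exI[of _ pi] conjI ballI impI)
    fix y :: complex assume y: "y \<in> UNIV" "y \<noteq> 0 \<and> dist y 0 < pi"
    then have "sin y \<noteq> 0" using sin_nz[of y] by (simp add: dist_norm)
    then show "cos y / (sin y / y) = fc y" using y by (simp add: fc_def field_simps)
  qed simp
  ultimately show ?thesis by (rule Lim_transform_eventually)
qed

lemma fc_holo: "fc holomorphic_on ball 0 pi"
proof (rule no_isolated_singularity'[where K="{0}"])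
  show "(fc \<longlongrightarrow> fc z) (at z within ball 0 pi)" if "z \<in> {0}" for z
    using that fc_lim by (auto simp: fc_def intro: tendsto_within_subset)
  have "(\<lambda>z. z * cos z / sin z) holomorphic_on (ball 0 pi - {0})"
    using sin_nz by (intro holomorphic_intros) auto
  then show "fc holomorphic_on (ball 0 pi - {0})"
    by (rule holomorphic_transform) (auto simp: fc_def)
qed auto

lemma wcot_Re: "\<bar>x\<bar> < pi \<Longrightarrow> (deriv ^^ n) wcot x = Re ((deriv ^^ n) fc (of_real x))"
proof (induction n arbitrary: x)
  case 0
  show ?case
    by (simp add: wcot_def fc_def sin_of_real[symmetric] cos_of_real[symmetric] flip: of_real_mult of_real_divide)
next
  case (Suc n)
  define g where "g = (deriv ^^ n) fc"
  have gh: "g holomorphic_on ball 0 pi" unfolding g_def by (intro holomorphic_higher_deriv fc_holo) auto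
  have ev: "\<forall>\<^sub>F y in nhds x. (deriv ^^ n) wcot y = Re (g (of_real y))"
  proof -
    have "\<forall>\<^sub>F y in nhds x. y \<in> {-pi<..<pi}"
      using Suc.prems by (intro eventually_nhds_in_open) auto
    then show ?thesis by eventually_elim (use Suc.IH g_def in auto)
  qed
  have "(g has_field_derivative deriv g (of_real x)) (at (of_real x))"
    by (rule holomorphic_derivI[OF gh]) (use Suc.prems in auto)
  then have "((g \<circ> of_real) has_vector_derivative (1 * deriv g (of_real x))) (at x)"
    by (intro field_vector_diff_chain_at) (auto intro: has_vector_derivative_of_real[of "\<lambda>x. x" 1, simplified] DERIV_ident)
  then have "((\<lambda>y. Re (g (of_real y))) has_vector_derivative Re (deriv g (of_real x))) (at x)"
    using bounded_linear.has_vector_derivative[OF bounded_linear_Re] by (simp add: o_def)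
  then have "((\<lambda>y. Re (g (of_real y))) has_real_derivative Re (deriv g (of_real x))) (at x)"
    by (simp add: has_real_derivative_iff_has_vector_derivative)
  then have "deriv (\<lambda>y. Re (g (of_real y))) x = Re (deriv g (of_real x))" by (rule DERIV_imp_deriv)
  moreover have "deriv ((deriv ^^ n) wcot) x = deriv (\<lambda>y. Re (g (of_real y))) x"
    by (rule deriv_cong_ev[OF ev refl])
  ultimately show ?case by (simp add: g_def)
qed

lemma sqrtcot_bound: "\<exists>B\<ge>0. \<forall>k. \<bar>sqrtcot_coeff k\<bar> \<le> B / 9 ^ k"
proof -
  have cb: "cball (0::complex) 3 \<subseteq> ball 0 pi" using pi_gt3 by auto
  have cont: "continuous_on (cball 0 3) fc"
    using holomorphic_on_imp_continuous_on[OF fc_holo] cb continuous_on_subset by blast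
  have "compact (fc ` sphere 0 3)"
    by (rule compact_continuous_image[OF continuous_on_subset[OF cont] compact_sphere]) auto
  then have "bounded (fc ` sphere 0 3)" by (rule compact_imp_bounded)
  then obtain B where B0: "\<forall>x\<in>fc ` sphere 0 3. norm x \<le> B" unfolding bounded_iff by blast
  have B: "norm (fc z) \<le> B" if "z \<in> sphere 0 3" for z using B0 that by blast
  have "norm (fc 3) \<le> B" by (rule B) simp
  then have B0: "0 \<le> B" using norm_ge_zero order_trans by blast
  have ci: "norm ((deriv ^^ n) fc 0) \<le> fact n * B / 3 ^ n" for n
    by (rule Cauchy_inequality[OF holomorphic_on_subset[OF fc_holo] cont])
       (use B pi_gt3 in \<open>auto simp: dist_norm\<close>)
  have "\<bar>sqrtcot_coeff k\<bar> \<le> B / 9 ^ k" for k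
  proof -
    have "\<bar>sqrtcot_coeff k\<bar> = \<bar>Re ((deriv ^^ (2*k)) fc 0)\<bar> / fact (2*k)"
      using wcot_Re[of 0 "2*k"] by (simp add: sqrtcot_coeff_def)
    also have "\<dots> \<le> norm ((deriv ^^ (2*k)) fc 0) / fact (2*k)"
      by (intro divide_right_mono abs_Re_le_cmod) auto
    also have "\<dots> \<le> (fact (2*k) * B / 3 ^ (2*k)) / fact (2*k)"
      by (intro divide_right_mono ci) auto
    also have "\<dots> = B / 9 ^ k" by (simp add: power_mult)
    finally show ?thesis .
  qed
  with B0 show ?thesis by blast
qed


lemma sqrtcot_0: "sqrtcot_coeff 0 = 1"
  by (simp add: sqrtcot_coeff_def wcot_def)

lemma S_bound: "\<exists>C0\<ge>0. \<forall>K::real^'n^'n. norm K \<le> 1 \<longrightarrow>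
    norm (mat_series sqrtcot_coeff K - mat 1) \<le> C0 * norm K"
proof -
  obtain B where B0: "B \<ge> 0" and B: "\<And>k. \<bar>sqrtcot_coeff k\<bar> \<le> B / 9 ^ k"
    using sqrtcot_bound by blast
  define N where "N = norm (mat 1 :: real^'n^'n)"
  have N0: "N \<ge> 0" by (simp add: N_def)
  show ?thesis
  proof (intro exI[of _ "B * N"] conjI allI impI)
    show "0 \<le> B * N" using B0 N0 by simp
    fix K :: "real^'n^'n" assume K: "norm K \<le> 1"
    define g where "g j = sqrtcot_coeff (Suc j) *\<^sub>R mpow K (Suc j)" for j
    define h where "h j = (norm K * B * N / 9) * (1/9) ^ j" for j
    have gh: "norm (g j) \<le> h j" for j
    proof -
      have "norm (g j) = \<bar>sqrtcot_coeff (Suc j)\<bar> * norm (mpow K (Suc j))" by (simp add: g_def)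
      also have "\<dots> \<le> (B / 9 ^ Suc j) * (N * norm K ^ Suc j)"
        by (intro mult_mono B norm_mpow[of K "Suc j", folded N_def]) (auto simp: B0)
      also have "norm K ^ Suc j \<le> norm K"
        using K by (simp add: power_le_one mult_right_le_one_le)
      then have "(B / 9 ^ Suc j) * (N * norm K ^ Suc j) \<le> (B / 9 ^ Suc j) * (N * norm K)"
        using B0 N0 by (intro mult_left_mono) auto
      also have "\<dots> = h j" by (simp add: h_def power_divide field_simps)
      finally show ?thesis .
    qed
    have sh: "summable h" unfolding h_def by (intro summable_mult summable_geometric) simp
    have sng: "summable (\<lambda>j. norm (g j))" by (rule summable_comparison_test[OF _ sh]) (use gh in auto)
    have sg: "summable g" by (rule summable_norm_cancel[OF sng])
    have "summable (\<lambda>k. sqrtcot_coeff k *\<^sub>R mpow K k)"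
      using sg unfolding g_def by (subst summable_Suc_iff[symmetric]) simp
    then have "mat_series sqrtcot_coeff K - mat 1 = suminf g"
      unfolding mat_series_def g_def by (subst suminf_split_head) (auto simp: sqrtcot_0)
    then have "norm (mat_series sqrtcot_coeff K - mat 1) \<le> (\<Sum>j. norm (g j))"
      using summable_norm[OF sng] by simp
    also have "\<dots> \<le> suminf h" by (rule suminf_le[OF gh sng sh])
    also have "suminf h = norm K * B * N / 8"
      unfolding h_def by (subst suminf_mult) (auto simp: suminf_geometric)
    also have "\<dots> \<le> B * N * norm K" using B0 N0 by (simp add: mult_ac)
    finally show "norm (mat_series sqrtcot_coeff K - mat 1) \<le> B * N * norm K" .
  qed
qed

lemma norm_mat_le: "norm (M::real^'n^'m) \<le> (\<Sum>a\<in>UNIV. \<Sum>b\<in>UNIV. \<bar>M $ a $ b\<bar>)"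
proof -
  have "norm M \<le> (\<Sum>a\<in>UNIV. norm (M $ a))"
    unfolding norm_vec_def by (rule L2_set_le_sum) simp
  also have "\<dots> \<le> (\<Sum>a\<in>UNIV. \<Sum>b\<in>UNIV. \<bar>M $ a $ b\<bar>)"
    by (intro sum_mono norm_le_l1_cart)
  finally show ?thesis .
qed

lemma Kmat_bound: "\<exists>\<kappa>\<ge>0. \<forall>y. norm (Kmat E \<beta> y) \<le> \<kappa> * norm y ^ 2"
proof (intro exI[of _ "\<Sum>a\<in>UNIV. \<Sum>b\<in>UNIV. \<Sum>c\<in>UNIV. \<Sum>d\<in>UNIV. \<bar>curv E \<beta> a c b d\<bar>"] conjI allI)
  show "0 \<le> (\<Sum>a\<in>UNIV. \<Sum>b\<in>UNIV. \<Sum>c\<in>UNIV. \<Sum>d\<in>UNIV. \<bar>curv E \<beta> a c b d\<bar>)"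
    by (intro sum_nonneg) auto
  fix y
  have ent: "\<bar>Kmat E \<beta> y $ a $ b\<bar> \<le> (\<Sum>c\<in>UNIV. \<Sum>d\<in>UNIV. \<bar>curv E \<beta> a c b d\<bar>) * norm y ^ 2" for a b
  proof -
    have "\<bar>Kmat E \<beta> y $ a $ b\<bar> \<le> (\<Sum>c\<in>UNIV. \<Sum>d\<in>UNIV. \<bar>curv E \<beta> a c b d * y $ c * y $ d\<bar>)"
      unfolding Kmat_def by (simp add: order_trans[OF sum_abs sum_mono[OF sum_abs]])
    also have "\<dots> \<le> (\<Sum>c\<in>UNIV. \<Sum>d\<in>UNIV. \<bar>curv E \<beta> a c b d\<bar> * norm y ^ 2)"
    proof (intro sum_mono)
      fix c d
      have "\<bar>y $ c\<bar> * \<bar>y $ d\<bar> \<le> norm y * norm y"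
        by (intro mult_mono component_le_norm_cart) auto
      then show "\<bar>curv E \<beta> a c b d * y $ c * y $ d\<bar> \<le> \<bar>curv E \<beta> a c b d\<bar> * norm y ^ 2"
        by (simp add: abs_mult power2_eq_square mult.assoc mult_left_mono)
    qed
    finally show ?thesis by (simp add: sum_distrib_right)
  qed
  have "norm (Kmat E \<beta> y) \<le> (\<Sum>a\<in>UNIV. \<Sum>b\<in>UNIV. \<bar>Kmat E \<beta> y $ a $ b\<bar>)" by (rule norm_mat_le)
  also have "\<dots> \<le> (\<Sum>a\<in>UNIV. \<Sum>b\<in>UNIV. (\<Sum>c\<in>UNIV. \<Sum>d\<in>UNIV. \<bar>curv E \<beta> a c b d\<bar>) * norm y ^ 2)"
    by (intro sum_mono ent)
  finally show "norm (Kmat E \<beta> y) \<le> (\<Sum>a\<in>UNIV. \<Sum>b\<in>UNIV. \<Sum>c\<in>UNIV. \<Sum>d\<in>UNIV. \<bar>curv E \<beta> a c b d\<bar>) * norm y ^ 2"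
    by (simp add: sum_distrib_right)
qed

lemma mpow_neg: "mpow (- D) k = (-1) ^ k *\<^sub>R mpow (D::real^'n^'n) k"
  by (induction k) (simp_all add: mm_neg_left mm_scaleR_right)

lemma Phi_neg: "Phi (- D) t = Phi D (- t)"
  unfolding Phi_def by (rule suminf_cong) (simp add: mpow_neg power_minus[of t])

lemma Psi_neg: "Psi (- D) t = - Psi D (- t)"
proof -
  have "Psi (- D) t = (\<Sum>k. - ((ab k * (- t) ^ k) *\<^sub>R mpow D (k - 1)))"
    unfolding Psi_def
  proof (rule suminf_cong)
    fix k show "(ab k * t ^ k) *\<^sub>R mpow (- D) (k - 1) = - ((ab k * (- t) ^ k) *\<^sub>R mpow D (k - 1))"
      by (cases k) (simp_all add: ab_def mpow_neg power_minus[of t])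
  qed
  also have "\<dots> = - Psi D (- t)" unfolding Psi_def by (rule suminf_minus[OF Psi_summable])
  finally show ?thesis .
qed


lemma mv_neg_left: "(- (A::real^'n^'m)) *v (x::real^'n) = - (A *v x)"
  using mv_scaleR_left[of "-1" A x] by simp
lemma mv_diff_left: "((A::real^'n^'m) - B) *v (x::real^'n) = A *v x - B *v x"
  using mv_add_left[of A "- B" x] mv_neg_left[of B x] by simp

lemma mv_neg_right: "(A::real^'n^'m) *v (- x) = - (A *v x)"
  using matrix_vector_right_distrib[of A x "- x"] by (simp add: eq_neg_iff_add_eq_0 add.commute)

lemma err_identity:
  fixes D P Ps Sz :: "real^'n^'n"
  assumes "P + D ** Ps = mat 1"
  shows "(Sz *v p - D *v Z) - ((- (D ** P)) *v y + P *v p)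
       = (Sz - mat 1) *v p - D *v (Z - (P *v y + Ps *v p))"
proof -
  have P: "P = mat 1 - D ** Ps" using assms by (simp add: algebra_simps)
  have "P *v p = p - D *v (Ps *v p)"
    unfolding P mv_diff_left by (simp add: matrix_vector_mul_assoc)
  moreover have "(- (D ** P)) *v y = - (D *v (P *v y))"
    by (simp add: mv_neg_left matrix_vector_mul_assoc)
  ultimately show ?thesis
    by (simp add: mv_diff_left matrix_vector_mult_diff_distrib matrix_vector_right_distrib algebra_simps)
qed

lemma core:
  fixes D :: "real^'n^'n" and S :: "real^'n \<Rightarrow> real^'n^'n"
  assumes rho: "\<rho> > 0" and Cs: "Cs \<ge> 0"
    and Sb: "\<And>z. norm z \<le> \<rho> \<Longrightarrow> norm (S z - mat 1) \<le> Cs * norm z ^ 2"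
    and T: "0 \<le> T"
  shows "\<exists>\<delta>>0. \<exists>K. \<forall>p y z. norm p < \<delta> \<longrightarrow> norm y < \<delta> \<longrightarrow> z 0 = y \<longrightarrow>
      (\<forall>\<tau>\<in>{0..T}. (z has_vector_derivative (S (z \<tau>) *v p - D *v z \<tau>)) (at \<tau>)) \<longrightarrow>
      norm (z T - (Phi D T *v y + Psi D T *v p)) \<le> K * (norm y ^ 2 + norm p ^ 2)"
proof -
  define N where "N = norm (mat 1 :: real^'n^'n)"
  define M where "M = N + Cs * \<rho>^2"
  define A where "A = norm D"
  define c where "c = 2*A+1"
  define E where "E = exp (c*T)"
  define Q where "Q = E * (1 + M^2 * T)"
  define \<delta> where "\<delta> = min 1 (\<rho> / sqrt (2*Q))"
  define K where "K = sqrt (E*T) * Cs * Q"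
  have N0: "N \<ge> 0" by (simp add: N_def)
  have M0: "M \<ge> 0" using N0 Cs by (simp add: M_def)
  have A0: "A \<ge> 0" by (simp add: A_def)
  have c0: "c \<ge> 0" using A0 by (simp add: c_def)
  have E1: "E \<ge> 1" using c0 T by (simp add: E_def)
  have Q1: "Q \<ge> 1"
  proof -
    have "1 \<le> 1 + M^2 * T" using T by simp
    from mult_mono[OF E1 this] show ?thesis using E1 by (simp add: Q_def)
  qed
  have \<delta>0: "\<delta> > 0" using rho Q1 by (simp add: \<delta>_def)
  have \<delta>sq: "2 * \<delta>^2 * Q \<le> \<rho>^2"
  proof -
    have "\<delta> \<le> \<rho> / sqrt (2*Q)" by (simp add: \<delta>_def)
    then have "\<delta>^2 \<le> (\<rho> / sqrt (2*Q))^2" using \<delta>0 by (intro power_mono) auto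
    also have "\<dots> = \<rho>^2 / (2*Q)" using Q1 by (simp add: power_divide)
    finally show ?thesis using Q1 by (simp add: field_simps)
  qed
  show ?thesis
  proof (rule exI[of _ \<delta>], intro conjI \<delta>0 exI[of _ K] allI impI)
    fix p y and z :: "real \<Rightarrow> real^'n"
    assume p: "norm p < \<delta>" and y: "norm y < \<delta>" and z0: "z 0 = y"
      and dz: "\<forall>\<tau>\<in>{0..T}. (z has_vector_derivative (S (z \<tau>) *v p - D *v z \<tau>)) (at \<tau>)"
    define R where "R = norm y ^ 2 + norm p ^ 2"
    have R0: "R \<ge> 0" by (simp add: R_def)
    have p1: "norm p \<le> 1" using p by (simp add: \<delta>_def)
    have "norm y ^ 2 < \<delta>^2" "norm p ^ 2 < \<delta>^2" using p y by (auto intro: power_strict_mono)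
    then have R\<delta>: "R < 2 * \<delta>^2" by (simp add: R_def)
    have QR: "Q * R < \<rho>^2"
    proof -
      have "Q * R < Q * (2 * \<delta>^2)" using R\<delta> Q1 by simp
      then show ?thesis using \<delta>sq by (simp add: mult_ac)
    qed
    have EQ: "E * (norm y ^ 2 + (M * norm p)^2 * s) \<le> Q * R" if "0 \<le> s" "s \<le> T" for s
    proof -
      have "(M * norm p)^2 * s \<le> (M^2 * T) * norm p ^ 2"
      proof -
        have "s * (M^2 * norm p ^ 2) \<le> T * (M^2 * norm p ^ 2)" using that by (intro mult_right_mono) auto
        then show ?thesis by (simp add: power_mult_distrib mult_ac)
      qed
      also have "\<dots> \<le> (M^2 * T) * R" using T by (intro mult_left_mono) (auto simp: R_def)
      finally have h1: "(M * norm p)^2 * s \<le> (M^2 * T) * R" .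
      have "norm y ^ 2 \<le> R" by (simp add: R_def)
      with h1 have "norm y ^ 2 + (M * norm p)^2 * s \<le> R + (M^2 * T) * R" by linarith
      then have "E * (norm y ^ 2 + (M * norm p)^2 * s) \<le> E * (R + (M^2 * T) * R)"
        using E1 by (intro mult_left_mono) auto
      then show ?thesis by (simp add: Q_def algebra_simps)
    qed
    have normS: "norm (S w *v p) \<le> M * norm p" if "norm w \<le> \<rho>" for w
    proof -
      have "norm (S w) \<le> N + norm (S w - mat 1)"
        using norm_triangle_ineq[of "mat 1" "S w - mat 1"] by (simp add: N_def)
      also have "\<dots> \<le> N + Cs * \<rho>^2"
      proof -
        have "norm w ^ 2 \<le> \<rho>^2" using that by (intro power_mono) auto
        then show ?thesis using Sb[OF that] Cs by (smt (verit) mult_left_mono)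
      qed
      finally have "norm (S w) \<le> M" by (simp add: M_def)
      then show ?thesis using norm_mv[of "S w" p] by (meson mult_right_mono norm_ge_zero order_trans)
    qed
    have rb: "norm (S (z \<tau>) *v p - D *v z \<tau>) \<le> A * norm (z \<tau>) + M * norm p"
      if "norm (z \<tau>) \<le> \<rho>" for \<tau>
      using norm_triangle_ineq4[of "S (z \<tau>) *v p" "D *v z \<tau>"] normS[OF that] norm_mv[of D "z \<tau>"]
      by (simp add: A_def)
    have inside: "\<forall>s\<in>{0..T}. norm (z s) < \<rho>"
    proof (rule gronwall2[where x=z and x'="\<lambda>\<tau>. S (z \<tau>) *v p - D *v z \<tau>" and B="M * norm p", OF T A0 _ rho])
      show "0 \<le> M * norm p" using M0 by simp
      show "(z has_vector_derivative S (z s) *v p - D *v z s) (at s)" if "s \<in> {0..T}" for s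
        using dz that by blast
      show "norm (S (z s) *v p - D *v z s) \<le> A * norm (z s) + M * norm p" if "norm (z s) \<le> \<rho>" for s
        using rb that by blast
      show "exp ((2 * A + 1) * T) * (norm (z 0)^2 + (M * norm p)^2 * T) < \<rho>^2"
        using EQ[of T] T QR z0 by (simp add: E_def c_def)
    qed
    have zb: "norm (z s) ^ 2 \<le> Q * R" if s: "s \<in> {0..T}" for s
    proof -
      have "norm (z s) ^ 2 \<le> exp ((2*A+1) * s) * (norm (z 0) ^ 2 + (M * norm p)^2 * s)"
        by (rule gronwall[of s A "M * norm p" z "\<lambda>\<tau>. S (z \<tau>) *v p - D *v z \<tau>"])
           (use s A0 M0 dz in auto, (rule rb, use inside s in \<open>auto intro: less_imp_le\<close>))
      also have "\<dots> \<le> E * (norm (z 0) ^ 2 + (M * norm p)^2 * s)"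
        unfolding E_def c_def using s A0 by (intro mult_right_mono) (auto intro!: mult_left_mono)
      also have "\<dots> \<le> Q * R" using EQ[of s] s z0 by simp
      finally show ?thesis .
    qed
    define e where "e \<tau> = z \<tau> - (Phi D \<tau> *v y + Psi D \<tau> *v p)" for \<tau>
    have de: "(e has_vector_derivative ((S (z \<tau>) - mat 1) *v p - D *v e \<tau>)) (at \<tau>)"
      if "\<tau> \<in> {0..T}" for \<tau>
    proof -
      have "(e has_vector_derivative ((S (z \<tau>) *v p - D *v z \<tau>) - ((- (D ** Phi D \<tau>)) *v y + Phi D \<tau> *v p))) (at \<tau>)"
        unfolding e_def
        by (intro has_vector_derivative_diff has_vector_derivative_add
            bounded_linear.has_vector_derivative[OF bl_mv Phi_deriv]
            bounded_linear.has_vector_derivative[OF bl_mv Psi_deriv])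
           (use dz that in auto)
      then show ?thesis unfolding e_def err_identity[OF Phi_Psi] .
    qed
    have eb: "norm ((S (z \<tau>) - mat 1) *v p - D *v e \<tau>) \<le> A * norm (e \<tau>) + Cs * (Q * R) * norm p"
      if \<tau>: "\<tau> \<in> {0..T}" for \<tau>
    proof -
      have "norm ((S (z \<tau>) - mat 1) *v p) \<le> norm (S (z \<tau>) - mat 1) * norm p" by (rule norm_mv)
      also have "\<dots> \<le> (Cs * norm (z \<tau>) ^ 2) * norm p"
      proof (intro mult_right_mono Sb)
        show "norm (z \<tau>) \<le> \<rho>" using inside \<tau> by (auto intro: less_imp_le)
      qed simp
      also have "\<dots> \<le> (Cs * (Q * R)) * norm p"
        using zb[OF \<tau>] Cs by (intro mult_right_mono mult_left_mono) auto
      finally have "norm ((S (z \<tau>) - mat 1) *v p) \<le> Cs * (Q * R) * norm p" .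
      then show ?thesis
        using norm_triangle_ineq4[of "(S (z \<tau>) - mat 1) *v p" "D *v e \<tau>"] norm_mv[of D "e \<tau>"]
        by (simp add: A_def)
    qed
    have "norm (e T) ^ 2 \<le> exp ((2*A+1)*T) * (norm (e 0) ^ 2 + (Cs * (Q * R) * norm p)^2 * T)"
      by (rule gronwall[OF T A0 _ de eb]) (use Cs Q1 R0 in auto)
    also have "e 0 = 0" by (simp add: e_def z0 Phi_0 Psi_0)
    finally have "norm (e T) ^ 2 \<le> E * T * (Cs * (Q * R) * norm p)^2"
      by (simp add: E_def c_def mult_ac)
    also have "\<dots> = (sqrt (E*T) * (Cs * (Q * R) * norm p))^2"
      using E1 T by (simp add: power_mult_distrib)
    finally have "norm (e T) \<le> sqrt (E*T) * (Cs * (Q * R) * norm p)"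
    proof (rule power2_le_imp_le)
      have "0 \<le> Q * R" using Q1 R0 by simp
      then show "0 \<le> sqrt (E*T) * (Cs * (Q * R) * norm p)" using Cs E1 T by simp
    qed
    also have "\<dots> \<le> sqrt (E*T) * (Cs * (Q * R) * 1)"
      using p1 Cs Q1 R0 E1 T by (intro mult_left_mono) auto
    also have "\<dots> = K * R" by (simp add: K_def)
    finally have fin: "norm (e T) \<le> K * R" .
    then show "norm (z T - (Phi D T *v y + Psi D T *v p)) \<le> K * (norm y ^ 2 + norm p ^ 2)"
      by (simp add: e_def R_def)
  qed
qed


lemma Dom_antisym:
  assumes E_antisym: "\<And>i a b. E i $ a $ b = - (E i $ b $ a)"
  shows "transpose (Dom E \<beta> \<omega>) = - Dom E \<beta> \<omega>"
proof -
  have "transpose (Dom E \<beta> \<omega>) $ a $ b = (- Dom E \<beta> \<omega>) $ a $ b" for a b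
  proof -
    have "transpose (Dom E \<beta> \<omega>) $ a $ b = (\<Sum>i\<in>UNIV. \<omega> $ i * - (\<Sum>k\<in>UNIV. \<beta> $ i $ k * E k $ b $ a))"
      by (simp add: Dom_def Dgen_def transpose_def)
    also have "\<dots> = (\<Sum>i\<in>UNIV. - (\<omega> $ i * - (\<Sum>k\<in>UNIV. \<beta> $ i $ k * E k $ a $ b)))"
      by (rule sum.cong[OF refl]) (simp add: E_antisym[of _ b a] sum_negf)
    also have "\<dots> = (- Dom E \<beta> \<omega>) $ a $ b"
      by (simp add: Dom_def Dgen_def sum_negf)
    finally show ?thesis .
  qed
  then show ?thesis by (simp add: vec_eq_iff)
qed

theorem mainTheorem3:
  fixes E :: "'m::finite \<Rightarrow> real^'n^'n"
    and \<beta> :: "real^'m^'m"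
    and \<omega> :: "real^'m"
    and yhat :: "real \<Rightarrow> real^'n \<Rightarrow> real^'n \<Rightarrow> real^'n"
    and U :: "((real^'n) \<times> (real^'n)) set"
    and I :: "real set"
  assumes E_antisym: "\<And>i a b. E i $ a $ b = - (E i $ b $ a)"
    and \<beta>_sym: "transpose \<beta> = \<beta>"
    and \<beta>_nondeg: "invertible \<beta>"
    and U_open: "open U" and U_0: "(0, 0) \<in> U"
    and I_open: "open I" and I_int: "is_interval I" and I_0: "0 \<in> I" and I_1: "1 \<in> I"
    and yhat_ode: "\<And>p y s. (p, y) \<in> U \<Longrightarrow> s \<in> I \<Longrightarrow>
        ((\<lambda>t. yhat t p y) has_vector_derivative yhat_rhs E \<beta> \<omega> p (yhat s p y)) (at s)"
    and yhat_init: "\<And>p y. (p, y) \<in> U \<Longrightarrow> yhat 0 p y = y"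
  shows "(\<forall>t\<in>I. (\<lambda>(p, y). norm (yhat t p y
              - (mat_series (expneg_coeff t) (Dom E \<beta> \<omega>) *v y
                 + mat_series (oneminusexp_div_coeff t) (Dom E \<beta> \<omega>) *v p)))
            \<in> O[at (0, 0)](\<lambda>(p, y). norm y ^ 2 + norm p ^ 2 + norm p * norm y))
      \<and> (\<exists>J :: real^'n^'n. ((\<lambda>p. yhat 1 p 0) has_derivative (\<lambda>v. J *v v)) (at 0)
            \<and> det J = det (mat_series sinhc_half_coeff (Dom E \<beta> \<omega>)))"
proof -
  define D where "D = Dom E \<beta> \<omega>"
  define S where "S z = mat_series sqrtcot_coeff (Kmat E \<beta> z)" for z
  obtain C0 where C0: "C0 \<ge> 0"
    and C0b: "\<And>K::real^'n^'n. norm K \<le> 1 \<Longrightarrow> norm (mat_series sqrtcot_coeff K - mat 1) \<le> C0 * norm K"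
    using S_bound by blast
  obtain \<kappa> where \<kappa>0: "\<kappa> \<ge> 0" and \<kappa>b: "\<And>y. norm (Kmat E \<beta> y) \<le> \<kappa> * norm y ^ 2"
    using Kmat_bound by blast
  define \<rho> where "\<rho> = 1 / (\<kappa> + 1)"
  have \<rho>0: "\<rho> > 0" using \<kappa>0 by (simp add: \<rho>_def)
  have Sb: "norm (S z - mat 1) \<le> (C0 * \<kappa>) * norm z ^ 2" if z: "norm z \<le> \<rho>" for z
  proof -
    have "norm z ^ 2 \<le> \<rho> ^ 2" using z by (intro power_mono) auto
    then have "\<kappa> * norm z ^ 2 \<le> \<kappa> * \<rho> ^ 2" using \<kappa>0 by (intro mult_left_mono)
    also have "\<kappa> * \<rho> ^ 2 \<le> 1"
    proof -
      have "\<kappa> \<le> (\<kappa> + 1) ^ 2" using \<kappa>0 by (simp add: power2_eq_square algebra_simps)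
      then show ?thesis using \<kappa>0 by (simp add: \<rho>_def power_divide divide_le_eq_1)
    qed
    finally have K1: "norm (Kmat E \<beta> z) \<le> 1" using \<kappa>b[of z] by linarith
    have "norm (S z - mat 1) \<le> C0 * norm (Kmat E \<beta> z)" unfolding S_def by (rule C0b[OF K1])
    also have "\<dots> \<le> C0 * (\<kappa> * norm z ^ 2)" using C0 \<kappa>b by (intro mult_left_mono) auto
    finally show ?thesis by (simp add: mult_ac)
  qed
  have Cs0: "C0 * \<kappa> \<ge> 0" using C0 \<kappa>0 by simp
  have rhs: "yhat_rhs E \<beta> \<omega> p w = S w *v p - D *v w" for p w
    by (simp add: yhat_rhs_def S_def D_def)
  have Iiv: "x \<in> I" if "a \<in> I" "b \<in> I" "a \<le> x" "x \<le> b" for a b x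
    using I_int that unfolding is_interval_1 by blast
  have key: "\<exists>\<delta>>0. \<exists>K. \<forall>p y. (p, y) \<in> U \<longrightarrow> norm p < \<delta> \<longrightarrow> norm y < \<delta> \<longrightarrow>
      norm (yhat t p y - (Phi D t *v y + Psi D t *v p)) \<le> K * (norm y ^ 2 + norm p ^ 2)"
    if t: "t \<in> I" for t
  proof (cases "t \<ge> 0")
    case True
    obtain \<delta> K where \<delta>: "\<delta> > 0" and H: "\<And>p y z. norm p < \<delta> \<Longrightarrow> norm y < \<delta> \<Longrightarrow> z 0 = y \<Longrightarrow>
      (\<forall>\<tau>\<in>{0..t}. (z has_vector_derivative (S (z \<tau>) *v p - D *v z \<tau>)) (at \<tau>)) \<Longrightarrow>
      norm (z t - (Phi D t *v y + Psi D t *v p)) \<le> K * (norm y ^ 2 + norm p ^ 2)"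
      using core[OF \<rho>0 Cs0 Sb True, of D] by blast
    show ?thesis
    proof (rule exI[of _ \<delta>], intro conjI \<delta> exI[of _ K] allI impI)
      fix p y assume U: "(p, y) \<in> U" and p: "norm p < \<delta>" and y: "norm y < \<delta>"
      show "norm (yhat t p y - (Phi D t *v y + Psi D t *v p)) \<le> K * (norm y ^ 2 + norm p ^ 2)"
      proof (rule H[OF p y, of "\<lambda>\<tau>. yhat \<tau> p y"])
        show "yhat 0 p y = y" by (rule yhat_init[OF U])
        show "\<forall>\<tau>\<in>{0..t}. ((\<lambda>\<tau>. yhat \<tau> p y) has_vector_derivative S (yhat \<tau> p y) *v p - D *v yhat \<tau> p y) (at \<tau>)"
          using yhat_ode[OF U] Iiv[OF I_0 t] by (auto simp: rhs)
      qed
    qed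
  next
    case False
    then have T: "0 \<le> - t" by simp
    obtain \<delta> K where \<delta>: "\<delta> > 0" and H: "\<And>p y z. norm p < \<delta> \<Longrightarrow> norm y < \<delta> \<Longrightarrow> z 0 = y \<Longrightarrow>
      (\<forall>\<tau>\<in>{0..-t}. (z has_vector_derivative (S (z \<tau>) *v p - (- D) *v z \<tau>)) (at \<tau>)) \<Longrightarrow>
      norm (z (-t) - (Phi (- D) (-t) *v y + Psi (- D) (-t) *v p)) \<le> K * (norm y ^ 2 + norm p ^ 2)"
      using core[OF \<rho>0 Cs0 Sb T, of "- D"] by blast
    show ?thesis
    proof (rule exI[of _ \<delta>], intro conjI \<delta> exI[of _ K] allI impI)
      fix p y assume U: "(p, y) \<in> U" and p: "norm p < \<delta>" and y: "norm y < \<delta>"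
      have "norm ((\<lambda>\<tau>. yhat (- \<tau>) p y) (-t) - (Phi (- D) (-t) *v y + Psi (- D) (-t) *v (- p)))
          \<le> K * (norm y ^ 2 + norm (- p) ^ 2)"
      proof (rule H)
        show "norm (- p) < \<delta>" using p by simp
        show "norm y < \<delta>" by (rule y)
        show "yhat (- 0) p y = y" using yhat_init[OF U] by simp
        show "\<forall>\<tau>\<in>{0..-t}. ((\<lambda>\<tau>. yhat (- \<tau>) p y) has_vector_derivative
            S (yhat (- \<tau>) p y) *v (- p) - (- D) *v yhat (- \<tau>) p y) (at \<tau>)"
        proof
          fix \<tau> assume \<tau>: "\<tau> \<in> {0..-t}"
          then have "- \<tau> \<in> I" using Iiv[OF t I_0] by auto
          then have d1: "((\<lambda>s. yhat s p y) has_vector_derivative S (yhat (- \<tau>) p y) *v p - D *v yhat (- \<tau>) p y) (at (- \<tau>))"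
            using yhat_ode[OF U] by (simp add: rhs)
          have d0: "((\<lambda>s::real. - s) has_vector_derivative -1) (at \<tau>)"
            by (auto intro!: derivative_eq_intros simp: has_real_derivative_iff_has_vector_derivative[symmetric])
          have eq: "(-1) *\<^sub>R (A *v p - D *v w) = A *v (- p) - (- D) *v w" for A w
          proof -
            have "A *v (- p) = - (A *v p)" using matrix_vector_right_distrib[of A p "- p"]
              by (simp add: eq_neg_iff_add_eq_0 add.commute)
            then show ?thesis by (simp add: mv_neg_left)
          qed
          from vector_diff_chain_at[OF d0 d1]
          show "((\<lambda>\<tau>. yhat (- \<tau>) p y) has_vector_derivative
            S (yhat (- \<tau>) p y) *v (- p) - (- D) *v yhat (- \<tau>) p y) (at \<tau>)"
            by (simp only: o_def eq)
        qed
      qed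
      then show "norm (yhat t p y - (Phi D t *v y + Psi D t *v p)) \<le> K * (norm y ^ 2 + norm p ^ 2)"
        by (simp add: Phi_neg Psi_neg mv_neg_left mv_neg_right)
    qed
  qed
  have part1: "(\<lambda>(p, y). norm (yhat t p y
              - (mat_series (expneg_coeff t) D *v y + mat_series (oneminusexp_div_coeff t) D *v p)))
            \<in> O[at (0, 0)](\<lambda>(p, y). norm y ^ 2 + norm p ^ 2 + norm p * norm y)"
    if t: "t \<in> I" for t
  proof -
    obtain \<delta> K where \<delta>: "\<delta> > 0" and H: "\<And>p y. (p, y) \<in> U \<Longrightarrow> norm p < \<delta> \<Longrightarrow> norm y < \<delta> \<Longrightarrow>
      norm (yhat t p y - (Phi D t *v y + Psi D t *v p)) \<le> K * (norm y ^ 2 + norm p ^ 2)"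
      using key[OF t] by blast
    obtain eU where eU: "eU > 0" and eUb: "\<And>q. dist q (0, 0) < eU \<Longrightarrow> q \<in> U"
      using U_open U_0 unfolding open_dist by blast
    show ?thesis
    proof (rule bigoI[where c = "max K 0"])
      show "\<forall>\<^sub>F q in at (0, 0). norm ((\<lambda>(p, y). norm (yhat t p y
              - (mat_series (expneg_coeff t) D *v y + mat_series (oneminusexp_div_coeff t) D *v p))) q)
          \<le> max K 0 * norm ((\<lambda>(p, y). norm y ^ 2 + norm p ^ 2 + norm p * norm y) q)"
        unfolding eventually_at
      proof (intro exI[of _ "min \<delta> eU"] conjI ballI impI)
        show "0 < min \<delta> eU" using \<delta> eU by simp
        fix q :: "(real^'n) \<times> (real^'n)" assume q: "q \<noteq> (0, 0) \<and> dist q (0, 0) < min \<delta> eU"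
        obtain p y where qpy: "q = (p, y)" by (cases q)
        have U: "(p, y) \<in> U" using eUb q qpy by auto
        have nq: "norm (p, y) < min \<delta> eU" using q qpy by (simp add: dist_norm)
        have p: "norm p < \<delta>" using norm_fst_le[of p y] nq by linarith
        have y: "norm y < \<delta>" using norm_snd_le[of y p] nq by linarith
        have "norm (yhat t p y - (Phi D t *v y + Psi D t *v p)) \<le> K * (norm y ^ 2 + norm p ^ 2)"
          by (rule H[OF U p y])
        also have "\<dots> \<le> max K 0 * (norm y ^ 2 + norm p ^ 2)" by (intro mult_right_mono) auto
        also have "\<dots> \<le> max K 0 * (norm y ^ 2 + norm p ^ 2 + norm p * norm y)" by (intro mult_left_mono) auto
        finally show "norm ((\<lambda>(p, y). norm (yhat t p y
              - (mat_series (expneg_coeff t) D *v y + mat_series (oneminusexp_div_coeff t) D *v p))) q)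
          \<le> max K 0 * norm ((\<lambda>(p, y). norm y ^ 2 + norm p ^ 2 + norm p * norm y) q)"
          by (simp add: qpy Phi_eq Psi_eq)
      qed
    qed
  qed
  have part2: "((\<lambda>p. yhat 1 p 0) has_derivative (\<lambda>v. Psi D 1 *v v)) (at 0)"
  proof -
    obtain \<delta> K where \<delta>: "\<delta> > 0" and H: "\<And>p y. (p, y) \<in> U \<Longrightarrow> norm p < \<delta> \<Longrightarrow> norm y < \<delta> \<Longrightarrow>
      norm (yhat 1 p y - (Phi D 1 *v y + Psi D 1 *v p)) \<le> K * (norm y ^ 2 + norm p ^ 2)"
      using key[OF I_1] by blast
    obtain eU where eU: "eU > 0" and eUb: "\<And>q. dist q (0, 0) < eU \<Longrightarrow> q \<in> U"
      using U_open U_0 unfolding open_dist by blast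
    have Hp: "norm (yhat 1 p 0 - Psi D 1 *v p) \<le> \<bar>K\<bar> * norm p * norm p"
      if p: "norm p < min \<delta> eU" for p
    proof -
      have U: "(p, 0) \<in> U" using eUb p by (simp add: dist_norm)
      have "norm (yhat 1 p 0 - (Phi D 1 *v 0 + Psi D 1 *v p)) \<le> K * (norm (0::real^'n) ^ 2 + norm p ^ 2)"
        by (rule H[OF U]) (use p \<delta> in auto)
      also have "\<dots> \<le> \<bar>K\<bar> * norm p * norm p"
        by (simp add: power2_eq_square mult.assoc mult_right_mono)
      finally show ?thesis by simp
    qed
    have f0: "yhat 1 0 0 = 0" using Hp[of 0] \<delta> eU by simp
    show ?thesis
      unfolding has_derivative_within_alt
    proof (intro conjI allI impI)
      show "bounded_linear (\<lambda>v. Psi D 1 *v v)" by (rule matrix_vector_mul_bounded_linear)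
      fix e :: real assume e: "e > 0"
      show "\<exists>d>0. \<forall>y\<in>UNIV. norm (y - 0) < d \<longrightarrow>
          norm (yhat 1 y 0 - yhat 1 0 0 - Psi D 1 *v (y - 0)) \<le> e * norm (y - 0)"
      proof (intro exI[of _ "min (min \<delta> eU) (e / (\<bar>K\<bar> + 1))"] conjI ballI impI)
        show "0 < min (min \<delta> eU) (e / (\<bar>K\<bar> + 1))" using \<delta> eU e by simp
        fix p :: "real^'n" assume p: "norm (p - 0) < min (min \<delta> eU) (e / (\<bar>K\<bar> + 1))"
        have "norm (yhat 1 p 0 - yhat 1 0 0 - Psi D 1 *v (p - 0)) \<le> \<bar>K\<bar> * norm p * norm p"
          using Hp[of p] p f0 by simp
        also have "\<dots> \<le> e * norm p"
        proof -
          have "\<bar>K\<bar> * norm p \<le> (\<bar>K\<bar> + 1) * norm p" by (simp add: mult_right_mono)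
          also have "\<dots> \<le> e" using p by (simp add: field_simps)
          finally show ?thesis by (intro mult_right_mono) auto
        qed
        finally show "norm (yhat 1 p 0 - yhat 1 0 0 - Psi D 1 *v (p - 0)) \<le> e * norm (p - 0)" by simp
      qed
    qed
  qed
  have "det (Psi D 1) = det (mat_series sinhc_half_coeff D)"
    unfolding D_def by (rule det_Psi[OF Dom_antisym[OF E_antisym]])
  with part1 part2 show ?thesis unfolding D_def by blast
qed

end
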